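(* Let $\Gamma$ be a finite metric tree with edges $e_1,\dots,e_E$ having propagation times $t_1,\dots,t_E$ that are linearly independent over $\mathbb{Q}$, and let $A$ be a vertex of $\Gamma$ of valence $n=\deg(A)$. Then for every $T\ge 0$, $$N(\Gamma, A,A,T) = \sum_{G\subseteq E(\Gamma)} c_G\, \#[G],$$ where the coefficient $c_G$ is defined as follows. Number the edges incident to $A$ as $e_1,\dots,e_n$ so that $G$ meets $E(\Gamma_{e_1}),\dots,E(\Gamma_{e_k})$ and is disjoint from $E(\Gamma_{e_{k+1}}),\dots,E(\Gamma_{e_n})$ (with $0\le k\le n$). Then $$ c_G = \prod_{i=1}^k z\big(\Gamma_{e_i}, G\cap E(\Gamma_{e_i}), A\big) \left[ \sum_{j=0}^{n-k-1} (n-k-j)\, \sigma_j(z_{k+1},\dots,z_n) \right],$$ where $z_i=z_i(\Gamma,A)$ and $\sigma_j$ is the $j$-th elementary symmetric polynomial ($\sigma_0=1$).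
   Context: Dynamics on a finite metric tree $\Gamma$: each edge $e_i$ is traversed by a moving point in the fixed time $t_i>0$ (no turning points on edges). At time $0$ the process starts at the vertex $A$ (a point at $A$ departs, one point along each edge incident to $A$). At a vertex of valence one a point is reflected. If $k$ points arrive simultaneously at an interior vertex of valence $v$, then $v$ points leave it, one along each incident edge; the number of new points born at that vertex at that moment is $v-k$. $N(\Gamma,A,X,T)$ denotes the total number of new points born at the vertex $X$ up to the moment $T$, when the process starts at $A$ at time $0$. Notation: $E(\Gamma)$ is the edge set and $|\Gamma|=|E(\Gamma)|$. For a vertex $A$ with incident edges $e_1,\dots,e_n$, $\Gamma_{e_i}$ is the maximal subtree of $\Gamma$ containing $e_i$ and none of the edges $e_j$, $j\neq i$ (the branch of $\Gamma$ at $A$ through $e_i$); thus $\Gamma=\bigcup_i\Gamma_{e_i}$. For a tree $\Gamma$ with a vertex $A$ and an edge set $G\subseteq E(\Gamma)$, $$z(\Gamma,G,A)=(-1)^{|G|}\sum_{\Gamma'}(-1)^{|\Gamma'|},$$ the sum being over all subtrees (connected subgraphs) $\Gamma'\subseteq\Gamma$ containing $A$ and having at least one edge, with $G\subseteq E(\Gamma')$. Also $z_i(\Gamma,A)=z(\Gamma_{e_i},\varnothing,A)$ for $1\le i\le \deg(A)$. For $G=\{e_{i_1},\dots,e_{i_m}\}$, $\#[G]$ is the number of tuples of nonnegative integers $(n_{i_1},\dots,n_{i_m})$ with $2n_{i_1}t_{i_1}+\dots+2n_{i_m}t_{i_m}\le T$; $\#[\varnothing]=1$. *)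

theory Defs
  imports Complex_Main "HOL-Library.FuncSet"
begin

definition adj :: "'v set set \<Rightarrow> ('v \<times> 'v) set" where
  "adj F = {(u, w). {u, w} \<in> F}"

definition connected_graph :: "'v set \<Rightarrow> 'v set set \<Rightarrow> bool" where
  "connected_graph Vs F \<longleftrightarrow> (\<forall>u\<in>Vs. \<forall>w\<in>Vs. (u, w) \<in> (adj F)\<^sup>*)"

definition is_tree :: "'v set \<Rightarrow> 'v set set \<Rightarrow> bool" where
  "is_tree V E \<longleftrightarrow> finite V \<and> V \<noteq> {} \<and>
     (\<forall>e\<in>E. \<exists>u w. e = {u, w} \<and> u \<noteq> w \<and> u \<in> V \<and> w \<in> V) \<and>
     connected_graph V E \<and> (\<forall>e\<in>E. \<not> connected_graph V (E - {e}))"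

definition incident :: "'v set set \<Rightarrow> 'v \<Rightarrow> 'v set set" where
  "incident E A = {e \<in> E. A \<in> e}"

definition subtrees_at :: "'v set set \<Rightarrow> 'v \<Rightarrow> 'v set set set" where
  "subtrees_at H A = {F. F \<subseteq> H \<and> F \<noteq> {} \<and> A \<in> \<Union>F \<and> connected_graph (\<Union>F) F}"

text \<open>Branch Gamma_e at A through the incident edge e: the maximal subtree
  containing e and no other edge incident to A.\<close>
definition branch :: "'v set set \<Rightarrow> 'v \<Rightarrow> 'v set \<Rightarrow> 'v set set" where
  "branch E A e = \<Union>{F. F \<subseteq> E \<and> e \<in> F \<and> connected_graph (\<Union>F) F \<and>
                        (\<forall>f\<in>F. A \<in> f \<longrightarrow> f = e)}"

definition zz :: "'v set set \<Rightarrow> 'v set set \<Rightarrow> 'v \<Rightarrow> int" where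
  "zz H G A = (-1) ^ card G * (\<Sum>F\<in>{F \<in> subtrees_at H A. G \<subseteq> F}. (-1) ^ card F)"

definition esym :: "nat \<Rightarrow> ('e \<Rightarrow> int) \<Rightarrow> 'e set \<Rightarrow> int" where
  "esym j f R = (\<Sum>S\<in>{S. S \<subseteq> R \<and> card S = j}. \<Prod>e\<in>S. f e)"

definition coeff :: "'v set set \<Rightarrow> 'v \<Rightarrow> 'v set set \<Rightarrow> int" where
  "coeff E A G =
    (let I = incident E A;
         K = {e \<in> I. G \<inter> branch E A e \<noteq> {}};
         R = I - K;
         n = card I; k = card K
     in (\<Prod>e\<in>K. zz (branch E A e) (G \<inter> branch E A e) A) *
        (\<Sum>j\<in>{0..<n - k}. int (n - k - j) * esym j (\<lambda>e. zz (branch E A e) {} A) R))"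

definition lattice_count :: "('v set \<Rightarrow> real) \<Rightarrow> 'v set set \<Rightarrow> real \<Rightarrow> nat" where
  "lattice_count t G T =
     card {f \<in> G \<rightarrow>\<^sub>E (UNIV :: nat set). (\<Sum>e\<in>G. 2 * real (f e) * t e) \<le> T}"

definition lin_indep_Q :: "'v set set \<Rightarrow> ('v set \<Rightarrow> real) \<Rightarrow> bool" where
  "lin_indep_Q E t \<longleftrightarrow>
     (\<forall>q :: 'v set \<Rightarrow> rat. (\<Sum>e\<in>E. of_rat (q e) * t e) = 0 \<longrightarrow> (\<forall>e\<in>E. q e = 0))"

text \<open>(u, w, s) in deps: a point departs from vertex u along edge {u,w} (towards w)
  at time s. Initially a point departs from A along each incident edge; whenever
  points arrive at a vertex w at time s, one point leaves w along each incident edge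
  (at a leaf this is reflection).\<close>
inductive_set deps :: "'v set set \<Rightarrow> ('v set \<Rightarrow> real) \<Rightarrow> 'v \<Rightarrow> ('v \<times> 'v \<times> real) set"
  for E t A where
  start: "{A, w} \<in> E \<Longrightarrow> (A, w, 0) \<in> deps E t A"
| step: "(u, w, s) \<in> deps E t A \<Longrightarrow> {w, x} \<in> E \<Longrightarrow> (w, x, s + t {u, w}) \<in> deps E t A"

definition arrivals :: "'v set set \<Rightarrow> ('v set \<Rightarrow> real) \<Rightarrow> 'v \<Rightarrow> 'v \<Rightarrow> real \<Rightarrow> nat" where
  "arrivals E t A X s = card {u. (u, X, s - t {u, X}) \<in> deps E t A}"

definition dep_times :: "'v set set \<Rightarrow> ('v set \<Rightarrow> real) \<Rightarrow> 'v \<Rightarrow> 'v \<Rightarrow> real set" where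
  "dep_times E t A X = {s. \<exists>w. (X, w, s) \<in> deps E t A}"

text \<open>N(Gamma, A, X, T): new points born at X (valence minus number of arrivals,
  at each moment points leave X) up to and including time T.\<close>
definition NN :: "'v set set \<Rightarrow> ('v set \<Rightarrow> real) \<Rightarrow> 'v \<Rightarrow> 'v \<Rightarrow> real \<Rightarrow> int" where
  "NN E t A X T = (\<Sum>s\<in>{s \<in> dep_times E t A X. s \<le> T}.
      int (card (incident E X)) - int (arrivals E t A X s))"

end

theory Submission
  imports Defs
begin

lemma adj_sym: "(a,b) \<in> adj F \<Longrightarrow> (b,a) \<in> adj F"
  by (auto simp: adj_def insert_commute)

lemma adj_mono: "F \<subseteq> F' \<Longrightarrow> adj F \<subseteq> adj F'"
  by (auto simp: adj_def)

lemma rtr_mono: "F \<subseteq> F' \<Longrightarrow> (a,b) \<in> (adj F)\<^sup>* \<Longrightarrow> (a,b) \<in> (adj F')\<^sup>*"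
  using rtrancl_mono[OF adj_mono] by blast

lemma rtr_sym: "(a,b) \<in> (adj F)\<^sup>* \<Longrightarrow> (b,a) \<in> (adj F)\<^sup>*"
proof (induction rule: rtrancl_induct)
  case base then show ?case by simp
next
  case (step y z)
  then show ?case using adj_sym by (meson converse_rtrancl_into_rtrancl)
qed

lemma adj_edge: "{a,b} \<in> F \<Longrightarrow> (a,b) \<in> (adj F)\<^sup>*"
  by (auto simp: adj_def)

lemma rtr_vert: "(a,b) \<in> (adj F)\<^sup>* \<Longrightarrow> a \<noteq> b \<Longrightarrow> b \<in> \<Union>F \<and> a \<in> \<Union>F"
proof (induction rule: rtrancl_induct)
  case base then show ?case by simp
next
  case (step y z)
  then show ?case by (cases "a = y") (auto simp: adj_def)
qed

lemma cut_lemma: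
  assumes "(a,x) \<in> (adj F)\<^sup>*"
  shows "(a,x) \<in> (adj (F - {{p,q}}))\<^sup>* \<or> (a,p) \<in> (adj (F - {{p,q}}))\<^sup>* \<or> (a,q) \<in> (adj (F - {{p,q}}))\<^sup>*"
  using assms
proof (induction rule: rtrancl_induct)
  case base then show ?case by simp
next
  case (step y z)
  show ?case
  proof (cases "{y,z} = {p,q}")
    case True
    then have "z = p \<or> z = q" "y = p \<or> y = q" by (auto simp: doubleton_eq_iff)
    then show ?thesis using step.IH by auto
  next
    case False
    then have "(y,z) \<in> adj (F - {{p,q}})" using step.hyps(2) by (auto simp: adj_def)
    then show ?thesis using step.IH by (meson rtrancl_into_rtrancl)
  qed
qed

lemma leaf_path:
  assumes f: "{u,y} \<in> S" "u \<noteq> y" and only: "\<forall>g\<in>S. u \<in> g \<longrightarrow> g = {u,y}"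
    and "(a,b) \<in> (adj S)\<^sup>*" and "a \<noteq> u"
  shows "(b \<noteq> u \<longrightarrow> (a,b) \<in> (adj (S - {{u,y}}))\<^sup>*) \<and> (b = u \<longrightarrow> (a,y) \<in> (adj (S - {{u,y}}))\<^sup>*)"
  using assms(4)
proof (induction rule: rtrancl_induct)
  case base then show ?case using assms(5) by simp
next
  case (step b b')
  have e: "{b,b'} \<in> S" using step.hyps(2) by (simp add: adj_def)
  show ?case
  proof (intro conjI impI)
    assume b': "b' \<noteq> u"
    show "(a, b') \<in> (adj (S - {{u, y}}))\<^sup>*"
    proof (cases "b = u")
      case True
      then have "{u,b'} = {u,y}" using only e by auto
      then have "b' = y" using b' by (auto simp: doubleton_eq_iff)
      then show ?thesis using step.IH True by simp
    next
      case False
      then have "{b,b'} \<noteq> {u,y}" using b' by (auto simp: doubleton_eq_iff)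
      then have "(b,b') \<in> adj (S - {{u,y}})" using e by (auto simp: adj_def)
      then show ?thesis using step.IH False by (meson rtrancl_into_rtrancl)
    qed
  next
    assume b': "b' = u"
    then have "{b,u} = {u,y}" using only e by auto
    then have "b = y" using f(2) by (auto simp: doubleton_eq_iff)
    then show "(a, y) \<in> (adj (S - {{u, y}}))\<^sup>*" using step.IH f(2) by simp
  qed
qed

lemma conn_from:
  assumes "a \<in> Vs" "\<forall>x\<in>Vs. (a,x) \<in> (adj F)\<^sup>*"
  shows "connected_graph Vs F"
  unfolding connected_graph_def using assms rtr_sym by (meson rtrancl_trans)

lemma conn_insert:
  assumes "connected_graph (\<Union>S) S" "x \<in> \<Union>S"
  shows "connected_graph (\<Union>(insert {x,y} S)) (insert {x,y} S)"
proof (rule conn_from[of x])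
  show "x \<in> \<Union>(insert {x,y} S)" by simp
  show "\<forall>z\<in>\<Union>(insert {x,y} S). (x,z) \<in> (adj (insert {x,y} S))\<^sup>*"
  proof
    fix z assume "z \<in> \<Union>(insert {x,y} S)"
    then consider "z = x" | "z = y" | "z \<in> \<Union>S" by auto
    then show "(x,z) \<in> (adj (insert {x,y} S))\<^sup>*"
    proof cases
      case 2 then show ?thesis by (intro adj_edge) simp
    next
      case 3
      then have "(x,z) \<in> (adj S)\<^sup>*" using assms by (auto simp: connected_graph_def)
      then show ?thesis by (rule rtr_mono[rotated]) auto
    qed simp
  qed
qed

lemma conn_remove_leaf:
  assumes c: "connected_graph (\<Union>S) S" and f: "{u,y} \<in> S" "u \<noteq> y"
    and only: "\<forall>g\<in>S. u \<in> g \<longrightarrow> g = {u,y}" and ne: "S \<noteq> {{u,y}}" and ne2: "{} \<notin> S"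
  shows "connected_graph (\<Union>(S - {{u,y}})) (S - {{u,y}})" "\<Union>(S - {{u,y}}) = \<Union>S - {u}"
proof -
  show eqV: "\<Union>(S - {{u,y}}) = \<Union>S - {u}"
  proof
    show "\<Union>(S - {{u,y}}) \<subseteq> \<Union>S - {u}" using only by blast
    show "\<Union>S - {u} \<subseteq> \<Union>(S - {{u,y}})"
    proof
      fix v assume v: "v \<in> \<Union>S - {u}"
      show "v \<in> \<Union>(S - {{u,y}})"
      proof (cases "\<exists>g\<in>S - {{u,y}}. v \<in> g")
        case True then show ?thesis by blast
      next
        case False
        then have vy: "v = y" using v by auto
        obtain g where g: "g \<in> S" "g \<noteq> {u,y}" using ne f by blast
        then have "g \<noteq> {}" "u \<notin> g" using only ne2 by auto
        then obtain a where a: "a \<in> g" "a \<noteq> u" by blast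
        have "(a,y) \<in> (adj S)\<^sup>*" using c a g f by (auto simp: connected_graph_def)
        then have ay: "(a,y) \<in> (adj (S - {{u,y}}))\<^sup>*" using leaf_path[OF f only _ a(2)] f(2) by auto
        show ?thesis
        proof (cases "a = y")
          case True then show ?thesis using vy a g by blast
        next
          case False then show ?thesis using rtr_vert[OF ay] vy by blast
        qed
      qed
    qed
  qed
  show "connected_graph (\<Union>(S - {{u,y}})) (S - {{u,y}})"
    unfolding connected_graph_def
  proof (intro ballI)
    fix a b assume ab: "a \<in> \<Union>(S - {{u,y}})" "b \<in> \<Union>(S - {{u,y}})"
    then have "a \<in> \<Union>S" "b \<in> \<Union>S" "a \<noteq> u" "b \<noteq> u" using eqV by auto
    then have "(a,b) \<in> (adj S)\<^sup>*" using c by (auto simp: connected_graph_def)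
    then show "(a,b) \<in> (adj (S - {{u,y}}))\<^sup>*" using leaf_path[OF f only _ \<open>a \<noteq> u\<close>] \<open>b \<noteq> u\<close> by auto
  qed
qed

locale tree_ctx =
  fixes V :: "'v set" and E :: "'v set set" and A :: 'v
  assumes tree: "is_tree V E" and AV: "A \<in> V"
begin

definition R :: "'v set \<Rightarrow> 'v set" where
  "R e = {x. (A,x) \<in> (adj (E - {e}))\<^sup>*}"

lemma finV: "finite V" using tree by (simp add: is_tree_def)

lemma edge_form: "e \<in> E \<Longrightarrow> \<exists>a b. e = {a,b} \<and> a \<noteq> b \<and> a \<in> V \<and> b \<in> V"
  using tree by (simp add: is_tree_def)

lemma EPow: "E \<subseteq> Pow V" using edge_form by blast

lemma finE: "finite E" using EPow finV by (meson finite_Pow_iff finite_subset)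

lemma edge_nonempty: "{} \<notin> E" using edge_form by blast

lemma edge_ne_single: "{a} \<notin> E" using edge_form by (metis doubleton_eq_iff insert_absorb2)

lemma conn: "connected_graph V E" using tree by (simp add: is_tree_def)

lemma bridge: "e \<in> E \<Longrightarrow> \<not> connected_graph V (E - {e})" using tree by (simp add: is_tree_def)

lemma reachA: "x \<in> V \<Longrightarrow> (A,x) \<in> (adj E)\<^sup>*" using conn AV by (simp add: connected_graph_def)

lemma A_in_R: "A \<in> R e" by (simp add: R_def)

lemma T2: assumes "{p,q} \<in> E" "{p,q} \<noteq> e" shows "p \<in> R e \<longleftrightarrow> q \<in> R e"
proof -
  have "(p,q) \<in> adj (E - {e})" "(q,p) \<in> adj (E - {e})" using assms by (auto simp: adj_def insert_commute)
  then show ?thesis unfolding R_def mem_Collect_eq by (blast intro: rtrancl_into_rtrancl)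
qed

lemma T1: assumes g: "{u,w} \<in> E" "u \<noteq> w" shows "u \<in> R {u,w} \<longleftrightarrow> w \<notin> R {u,w}"
proof
  assume u: "u \<in> R {u,w}"
  show "w \<notin> R {u,w}"
  proof
    assume w: "w \<in> R {u,w}"
    have "(A,x) \<in> (adj (E - {{u,w}}))\<^sup>*" if "(A,x) \<in> (adj E)\<^sup>*" for x
      using that
    proof (induction rule: rtrancl_induct)
      case base then show ?case by simp
    next
      case (step y z)
      show ?case
      proof (cases "{y,z} = {u,w}")
        case True
        then have "z = u \<or> z = w" by (auto simp: doubleton_eq_iff)
        then show ?thesis using u w by (auto simp: R_def)
      next
        case False
        then have "(y,z) \<in> adj (E - {{u,w}})" using step.hyps(2) by (auto simp: adj_def)
        then show ?thesis using step.IH by (meson rtrancl_into_rtrancl)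
      qed
    qed
    then have "connected_graph V (E - {{u,w}})"
      using reachA AV by (intro conn_from[of A]) auto
    then show False using bridge g by blast
  qed
next
  assume w: "w \<notin> R {u,w}"
  have "u \<in> V" using g edge_form by (metis doubleton_eq_iff)
  then have "(A,u) \<in> (adj E)\<^sup>*" by (rule reachA)
  from cut_lemma[OF this, of u w] show "u \<in> R {u,w}" using w by (auto simp: R_def)
qed

lemma U: assumes f: "{u,y} \<in> E" "u \<noteq> y" and g: "{u,z} \<in> E" "u \<noteq> z"
  and nf: "u \<notin> R {u,y}" and ng: "u \<notin> R {u,z}"
shows "{u,y} = {u,z}"
proof (rule ccontr)
  assume ne: "{u,y} \<noteq> {u,z}"
  have y: "y \<in> R {u,y}" using T1[OF f] nf by blast
  have z: "z \<in> R {u,z}" using T1[OF g] ng by blast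
  have zf: "z \<notin> R {u,y}" using T2[OF g(1)] ne nf by metis
  have yg: "y \<notin> R {u,z}" using T2[OF f(1)] ne ng by metis
  have "(A,y) \<in> (adj (E - {{u,y}}))\<^sup>*" using y by (simp add: R_def)
  from cut_lemma[OF this, of u z] consider
    "(A,y) \<in> (adj (E - {{u,y}} - {{u,z}}))\<^sup>*" | "(A,u) \<in> (adj (E - {{u,y}} - {{u,z}}))\<^sup>*"
    | "(A,z) \<in> (adj (E - {{u,y}} - {{u,z}}))\<^sup>*" by blast
  then show False
  proof cases
    case 1 then have "y \<in> R {u,z}" unfolding R_def mem_Collect_eq by (rule rtr_mono[rotated]) auto
    then show ?thesis using yg by simp
  next
    case 2 then have "u \<in> R {u,y}" unfolding R_def mem_Collect_eq by (rule rtr_mono[rotated]) auto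
    then show ?thesis using nf by simp
  next
    case 3 then have "z \<in> R {u,y}" unfolding R_def mem_Collect_eq by (rule rtr_mono[rotated]) auto
    then show ?thesis using zf by simp
  qed
qed

end

context tree_ctx begin

definition time :: "('v set \<Rightarrow> real) \<Rightarrow> ('v set \<Rightarrow> nat) \<Rightarrow> real" where
  "time t c = (\<Sum>e\<in>E. real (c e) * t e)"

definition supp :: "('v set \<Rightarrow> nat) \<Rightarrow> 'v set set" where
  "supp c = {e\<in>E. c e \<noteq> 0}"

definition adm_at :: "'v \<Rightarrow> 'v set set \<Rightarrow> bool" where
  "adm_at u S \<longleftrightarrow> (S = {} \<and> u = A) \<or> (S \<in> subtrees_at E A \<and> u \<in> \<Union>S)"

definition W :: "'v \<Rightarrow> ('v set \<Rightarrow> nat) \<Rightarrow> bool" where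
  "W u c \<longleftrightarrow> (\<forall>e\<in>E. odd (c e) \<longleftrightarrow> u \<notin> R e) \<and> adm_at u (supp c)"

lemma time_upd: "g \<in> E \<Longrightarrow> time t (c(g:=v)) = time t c + (real v - real (c g)) * t g"
proof -
  assume g: "g \<in> E"
  have "time t (c(g:=v)) = real v * t g + (\<Sum>e\<in>E-{g}. real (c e) * t e)"
    unfolding time_def using g finE by (simp add: sum.remove)
  also have "\<dots> = time t c + (real v - real (c g)) * t g"
    unfolding time_def using g finE by (simp add: sum.remove algebra_simps)
  finally show ?thesis .
qed

lemma single_subtree: "{A,w} \<in> E \<Longrightarrow> {{A,w}} \<in> subtrees_at E A"
  unfolding subtrees_at_def
  by (auto intro!: conn_from[of A] simp: adj_edge)

lemma edge_other: "{u,w} \<in> E \<Longrightarrow> u \<noteq> w"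
  using edge_ne_single by (metis insert_absorb2)

lemma soundness:
  assumes "(u,w,s) \<in> deps E t A"
  shows "{u,w} \<in> E \<and> (\<exists>c. W u c \<and> s = time t c)"
  using assms
proof (induction rule: deps.induct)
  case (start w)
  have "W A (\<lambda>_. 0)" unfolding W_def adm_at_def supp_def using A_in_R by auto
  moreover have "time t (\<lambda>_. 0) = 0" by (simp add: time_def)
  ultimately show ?case using start by metis
next
  case (step u w s x)
  from step.IH obtain c where g: "{u,w} \<in> E" and Wc: "W u c" and s: "s = time t c" by blast
  define c' where "c' = c({u,w} := Suc (c {u,w}))"
  have uw: "u \<noteq> w" using edge_other g by blast
  have par: "\<forall>e\<in>E. odd (c' e) \<longleftrightarrow> w \<notin> R e"
  proof
    fix e assume e: "e \<in> E"
    show "odd (c' e) \<longleftrightarrow> w \<notin> R e"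
    proof (cases "e = {u,w}")
      case True
      then show ?thesis using Wc e T1[OF g uw] unfolding W_def c'_def by auto
    next
      case False
      then show ?thesis using Wc e T2[OF g, of e] unfolding W_def c'_def by auto
    qed
  qed
  have sp: "supp c' = insert {u,w} (supp c)" unfolding supp_def c'_def using g by auto
  have adm: "adm_at w (supp c')"
  proof (cases "supp c = {}")
    case True
    then have "u = A" using Wc by (auto simp: W_def adm_at_def)
    then show ?thesis using sp True single_subtree g by (simp add: adm_at_def)
  next
    case False
    then have S: "supp c \<in> subtrees_at E A" "u \<in> \<Union>(supp c)" using Wc by (auto simp: W_def adm_at_def)
    have "connected_graph (\<Union>(insert {u,w} (supp c))) (insert {u,w} (supp c))"
      using S by (intro conn_insert) (auto simp: subtrees_at_def)
    then have "insert {u,w} (supp c) \<in> subtrees_at E A" using S g by (auto simp: subtrees_at_def)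
    then show ?thesis using sp by (simp add: adm_at_def)
  qed
  have "time t c' = s + t {u,w}" unfolding c'_def s using time_upd[OF g] by simp
  then show ?case using par adm step.hyps(2) unfolding W_def by metis
qed

lemma edge_at: "f \<in> E \<Longrightarrow> u \<in> f \<Longrightarrow> \<exists>y. f = {u,y} \<and> u \<noteq> y \<and> y \<in> V"
  using edge_form by (metis doubleton_eq_iff insertE singletonD)

lemma sum_dec: fixes c :: "'v set \<Rightarrow> nat" shows "f \<in> E \<Longrightarrow> c f \<noteq> 0 \<Longrightarrow> sum (c(f := c f - 1)) E < sum c E"
proof -
  assume f: "f \<in> E" "c f \<noteq> 0"
  have "sum (c(f := c f - 1)) E = (c f - 1) + sum c (E - {f})"
    using f finE by (simp add: sum.remove)
  also have "\<dots> < c f + sum c (E - {f})" using f(2) diff_less[of 1 "c f"] by simp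
  also have "\<dots> = sum c E" using f finE by (simp add: sum.remove)
  finally show ?thesis .
qed

lemma completeness:
  assumes "W u c" "{u,x} \<in> E"
  shows "(u,x,time t c) \<in> deps E t A"
  using assms
proof (induction "sum c E" arbitrary: u c x rule: less_induct)
  case less
  note Wc = less.prems(1)
  have go: "(u,x,time t c) \<in> deps E t A"
    if y: "{u,y} \<in> E" "c {u,y} \<noteq> 0" "W y (c({u,y} := c {u,y} - 1))" for y
  proof -
    let ?c' = "c({u,y} := c {u,y} - 1)"
    have "(y,u,time t ?c') \<in> deps E t A"
      using less.hyps[OF sum_dec[of "{u,y}" c, OF y(1,2)] y(3)] y(1) by (simp add: insert_commute)
    from deps.step[OF this less.prems(2)]
    have "(u, x, time t ?c' + t {y,u}) \<in> deps E t A" .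
    moreover have "time t ?c' + t {y,u} = time t c"
      using time_upd[OF y(1), where c=c and t=t and v="c {u,y} - 1"] y(2) by (simp add: insert_commute of_nat_diff algebra_simps)
    ultimately show ?thesis by simp
  qed
  show ?case
  proof (cases "supp c = {}")
    case True
    then have "u = A" using Wc by (auto simp: W_def adm_at_def)
    moreover have "time t c = 0" using True unfolding time_def supp_def by auto
    ultimately show ?thesis using less.prems(2) deps.start by metis
  next
    case False
    define S where "S = supp c"
    have S: "S \<in> subtrees_at E A" "u \<in> \<Union>S" using Wc False by (auto simp: W_def adm_at_def S_def)
    have SE: "S \<subseteq> E" using S by (auto simp: subtrees_at_def)
    have par: "\<And>e. e \<in> E \<Longrightarrow> odd (c e) \<longleftrightarrow> u \<notin> R e" using Wc by (auto simp: W_def)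
    show ?thesis
    proof (cases "u = A")
      case True
      obtain f where f: "f \<in> S" "A \<in> f" using S True by blast
      obtain y where fy: "f = {A,y}" "A \<noteq> y" using edge_at f SE by blast
      have fE: "f \<in> E" using f SE by auto
      have cf: "c f \<noteq> 0" using f by (simp add: S_def supp_def)
      have ev: "even (c f)" using par[OF fE] A_in_R True by auto
      let ?c' = "c(f := c f - 1)"
      have "W y ?c'"
        unfolding W_def
      proof
        show "\<forall>e\<in>E. odd (?c' e) = (y \<notin> R e)"
        proof
          fix e assume e: "e \<in> E"
          show "odd (?c' e) = (y \<notin> R e)"
          proof (cases "e = f")
            case True
            then show ?thesis using ev cf T1[OF fE[unfolded fy] fy(2)] A_in_R fy by auto
          next
            case False
            then show ?thesis using par[OF e] T2[OF fE[unfolded fy], of e] A_in_R fy True by auto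
          qed
        qed
        have "supp ?c' = S" unfolding S_def supp_def using ev cf by (auto simp: dvd_def)
        then show "adm_at y (supp ?c')" using S fy f by (auto simp: adm_at_def)
      qed
      then show ?thesis using go[of y] fy fE cf True by auto
    next
      case uA: False
      show ?thesis
      proof (cases "\<exists>f\<in>S. u \<in> f \<and> c f \<ge> 2")
        case True
        then obtain f where f: "f \<in> S" "u \<in> f" "c f \<ge> 2" by blast
        obtain y where fy: "f = {u,y}" "u \<noteq> y" using edge_at f SE by blast
        have fE: "f \<in> E" using f SE by auto
        let ?c' = "c(f := c f - 1)"
        have "W y ?c'"
          unfolding W_def
        proof
          show "\<forall>e\<in>E. odd (?c' e) = (y \<notin> R e)"
          proof
            fix e assume e: "e \<in> E"
            show "odd (?c' e) = (y \<notin> R e)"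
            proof (cases "e = f")
              case True
              then show ?thesis using par[OF fE] f(3) T1[OF fE[unfolded fy] fy(2)] fy by auto
            next
              case False
              then show ?thesis using par[OF e] T2[OF fE[unfolded fy], of e] fy by auto
            qed
          qed
          have "supp ?c' = S" unfolding S_def supp_def using f(3) fE by auto
          then show "adm_at y (supp ?c')" using S fy f by (auto simp: adm_at_def)
        qed
        then show ?thesis using go[of y] fy fE f(3) by auto
      next
        case False
        obtain f where f: "f \<in> S" "u \<in> f" using S by blast
        obtain y where fy: "f = {u,y}" "u \<noteq> y" using edge_at f SE by blast
        have fE: "f \<in> E" using f SE by auto
        have one: "c g = 1" if "g \<in> S" "u \<in> g" for g
          using False that by (auto simp: S_def supp_def)
        have nf: "u \<notin> R f" using par[OF fE] one[OF f] by simp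
        have only: "\<forall>g\<in>S. u \<in> g \<longrightarrow> g = {u,y}"
        proof (intro ballI impI)
          fix g assume g: "g \<in> S" "u \<in> g"
          obtain z where gz: "g = {u,z}" "u \<noteq> z" using edge_at g SE by blast
          have "u \<notin> R g" using par[of g] one[OF g] g SE by auto
          then show "g = {u,y}" using U[OF fE[unfolded fy] fy(2), of z] gz g SE nf fy by auto
        qed
        let ?c' = "c(f := 0)"
        have cf1: "c f = 1" using one f by simp
        have "W y ?c'"
          unfolding W_def
        proof
          show "\<forall>e\<in>E. odd (?c' e) = (y \<notin> R e)"
          proof
            fix e assume e: "e \<in> E"
            show "odd (?c' e) = (y \<notin> R e)"
            proof (cases "e = f")
              case True
              then show ?thesis using nf T1[OF fE[unfolded fy] fy(2)] fy by auto
            next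
              case False
              then show ?thesis using par[OF e] T2[OF fE[unfolded fy], of e] fy by auto
            qed
          qed
          have sp: "supp ?c' = S - {f}" unfolding S_def supp_def by auto
          show "adm_at y (supp ?c')"
          proof (cases "S = {f}")
            case True
            then have "A \<in> f" using S by (auto simp: subtrees_at_def)
            then have "y = A" using uA fy by auto
            then show ?thesis using sp True by (simp add: adm_at_def)
          next
            case False
            have ne2: "{} \<notin> S" using SE edge_nonempty by auto
            have c1: "connected_graph (\<Union>S) S" using S by (auto simp: subtrees_at_def)
            note cr = conn_remove_leaf[OF c1 f(1)[unfolded fy] fy(2) only False[unfolded fy] ne2]
            have "A \<in> \<Union>S" using S by (auto simp: subtrees_at_def)
            moreover have "S - {f} \<noteq> {}" using False f by auto
            ultimately have "S - {f} \<in> subtrees_at E A" using cr fy uA SE by (auto simp: subtrees_at_def)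
            moreover have "y \<in> \<Union>(S - {f})" using cr fy f by auto
            ultimately show ?thesis using sp by (simp add: adm_at_def)
          qed
        qed
        then show ?thesis using go[of y] fy fE cf1 by auto
      qed
    qed
  qed
qed

end

context tree_ctx begin

abbreviation I where "I \<equiv> incident E A"

definition oth :: "'v set \<Rightarrow> 'v" where "oth e = (SOME u. e = {A,u} \<and> A \<noteq> u)"

lemma oth: "e \<in> I \<Longrightarrow> e = {A, oth e} \<and> A \<noteq> oth e"
proof -
  assume "e \<in> I"
  then have "\<exists>u. e = {A,u} \<and> A \<noteq> u" using edge_at[of e A] by (auto simp: incident_def)
  then show ?thesis unfolding oth_def by (rule someI_ex)
qed

lemma oth1: "e \<in> I \<Longrightarrow> e = {A, oth e}" using oth by blast
lemma oth2: "e \<in> I \<Longrightarrow> A \<noteq> oth e" using oth by blast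
lemma oth_eq: "e \<in> I \<Longrightarrow> e = {A,u} \<Longrightarrow> A \<noteq> u \<Longrightarrow> oth e = u"
  by (metis doubleton_eq_iff oth1 oth2)

lemma IE: "e \<in> I \<Longrightarrow> e \<in> E" by (simp add: incident_def)

definition Cu :: "'v set \<Rightarrow> 'v set" where
  "Cu e = {x. (oth e, x) \<in> (adj (E - {e}))\<^sup>*}"

lemma oth_C: "oth e \<in> Cu e" by (simp add: Cu_def)

lemma A_notin_C: assumes e: "e \<in> I" shows "A \<notin> Cu e"
proof
  assume AC: "A \<in> Cu e"
  define u where "u = oth e"
  have eu: "e = {A,u}" unfolding u_def by (rule oth1[OF e])
  have Au: "A \<noteq> u" unfolding u_def by (rule oth2[OF e])
  have "(u, A) \<in> (adj (E - {e}))\<^sup>*" using AC unfolding Cu_def u_def by simp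
  then have "(A, u) \<in> (adj (E - {e}))\<^sup>*" by (rule rtr_sym)
  then have "u \<in> R e" unfolding R_def by simp
  moreover have "A \<in> R e" by (rule A_in_R)
  moreover have "{A, u} \<in> E" using IE[OF e] eu by simp
  ultimately show False using T1[of A u] Au eu by simp
qed

lemma C_edge: assumes "{p,q} \<in> E" "{p,q} \<noteq> e" shows "p \<in> Cu e \<longleftrightarrow> q \<in> Cu e"
proof -
  have "(p,q) \<in> adj (E - {e})" "(q,p) \<in> adj (E - {e})" using assms by (auto simp: adj_def insert_commute)
  then show ?thesis unfolding Cu_def mem_Collect_eq by (blast intro: rtrancl_into_rtrancl)
qed

lemma edge_ex: "g \<in> E \<Longrightarrow> \<exists>x. x \<in> g" using edge_nonempty by (metis all_not_in_conv)

lemma C_edge_sub: assumes "g \<in> E" "g \<noteq> e" "x \<in> g" "x \<in> Cu e" shows "g \<subseteq> Cu e"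
proof -
  obtain y where "g = {x,y}" using edge_at assms by blast
  then show ?thesis using C_edge[of x y e] assms by auto
qed

lemma branch_eq: assumes e: "e \<in> I"
  shows "branch E A e = insert e {g\<in>E-{e}. g \<subseteq> Cu e}"
proof
  define u where "u = oth e"
  have eu: "e = {A,u}" "A \<noteq> u" unfolding u_def by (rule oth1[OF e], rule oth2[OF e])
  show "branch E A e \<subseteq> insert e {g\<in>E-{e}. g \<subseteq> Cu e}"
  proof
    fix g assume "g \<in> branch E A e"
    then obtain F where F: "F \<subseteq> E" "e \<in> F" "connected_graph (\<Union>F) F" "\<forall>f\<in>F. A \<in> f \<longrightarrow> f = e" "g \<in> F"
      unfolding branch_def by blast
    show "g \<in> insert e {g\<in>E-{e}. g \<subseteq> Cu e}"
    proof (cases "g = e")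
      case False
      have "v \<in> Cu e" if v: "v \<in> g" for v
      proof -
        have vA: "v \<noteq> A" using F(4,5) False v by blast
        have uF: "u \<in> \<Union>F" using F(2) eu by blast
        have vF: "v \<in> \<Union>F" using F(5) v by blast
        have "(u,v) \<in> (adj F)\<^sup>*" using F(3) uF vF unfolding connected_graph_def by blast
        moreover have only: "\<forall>f\<in>F. A \<in> f \<longrightarrow> f = {A,u}" using F(4) eu(1) by simp
        moreover have "{A,u} \<in> F" using F(2) eu(1) by simp
        ultimately have "(u,v) \<in> (adj (F - {{A,u}}))\<^sup>*"
          using leaf_path[of A u F u v] eu(2) vA by blast
        then have "(u,v) \<in> (adj (E - {e}))\<^sup>*" by (rule rtr_mono[rotated]) (use F(1) eu(1) in blast)
        then show ?thesis by (simp add: Cu_def u_def)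
      qed
      then have "g \<subseteq> Cu e" by blast
      then show ?thesis using F(1,5) False by blast
    qed simp
  qed
  show "insert e {g\<in>E-{e}. g \<subseteq> Cu e} \<subseteq> branch E A e"
  proof -
    define F0 where "F0 = insert e {g\<in>E-{e}. g \<subseteq> Cu e}"
    have reach: "(u,x) \<in> (adj F0)\<^sup>*" if "x \<in> Cu e" for x
    proof -
      have "(u,x) \<in> (adj (E - {e}))\<^sup>*" using that by (simp add: Cu_def u_def)
      then show ?thesis
      proof (induction rule: rtrancl_induct)
        case (step b b')
        have "(u,b) \<in> (adj (E - {e}))\<^sup>*" by fact
        then have bC: "b \<in> Cu e" by (simp add: Cu_def u_def)
        have ed: "{b,b'} \<in> E" "{b,b'} \<noteq> e" using step.hyps(2) by (auto simp: adj_def)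
        then have "{b,b'} \<subseteq> Cu e" using C_edge_sub bC by auto
        then have "(b,b') \<in> adj F0" using ed by (auto simp: adj_def F0_def)
        then show ?case using step.IH by (meson rtrancl_into_rtrancl)
      qed simp
    qed
    have "connected_graph (\<Union>F0) F0"
    proof (rule conn_from[of u])
      have "e \<in> F0" by (simp add: F0_def)
      then show "u \<in> \<Union>F0" using eu by blast
      show "\<forall>x\<in>\<Union>F0. (u, x) \<in> (adj F0)\<^sup>*"
      proof
        fix x assume "x \<in> \<Union>F0"
        then obtain g where g: "g \<in> F0" "x \<in> g" by blast
        then have "g = e \<or> g \<subseteq> Cu e" unfolding F0_def by blast
        then consider "x = A" | "x = u" | "x \<in> Cu e" using g(2) eu by blast
        then show "(u, x) \<in> (adj F0)\<^sup>*"
        proof cases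
          case 1
          have "{u,A} \<in> F0" using eu by (simp add: F0_def insert_commute)
          then show ?thesis using 1 by (intro adj_edge) simp
        next
          case 3 then show ?thesis by (rule reach)
        qed simp
      qed
    qed
    moreover have "\<forall>f\<in>F0. A \<in> f \<longrightarrow> f = e" using A_notin_C[OF e] by (auto simp: F0_def)
    moreover have "F0 \<subseteq> E" using IE[OF e] by (auto simp: F0_def)
    moreover have "F0 \<subseteq> E" using IE[OF e] by (auto simp: F0_def)
    moreover have "e \<in> F0" by (simp add: F0_def)
    ultimately have "F0 \<in> {F. F \<subseteq> E \<and> e \<in> F \<and> connected_graph (\<Union>F) F \<and> (\<forall>f\<in>F. A \<in> f \<longrightarrow> f = e)}"
      by blast
    then have "F0 \<subseteq> branch E A e" unfolding branch_def by (rule Union_upper)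
    then show ?thesis by (simp add: F0_def)
  qed
qed

lemma branch_sub: "e \<in> I \<Longrightarrow> branch E A e \<subseteq> E" using branch_eq IE by auto

lemma e_in_branch: "e \<in> I \<Longrightarrow> e \<in> branch E A e" using branch_eq by auto

lemma branch_verts: assumes e: "e \<in> I" shows "\<Union>(branch E A e) \<subseteq> insert A (Cu e)"
  proof -
  have "e = {A, oth e}" by (rule oth1[OF e])
  then show ?thesis using branch_eq[OF e] oth_C[of e] by (auto simp del: insert_commute)
qed

lemma I_branch: assumes "e \<in> I" "e' \<in> I" "e' \<in> branch E A e" shows "e' = e"
  using assms branch_eq[OF assms(1)] A_notin_C[OF assms(1)] by (auto simp: incident_def)

lemma branch_disj: assumes e: "e \<in> I" and e': "e' \<in> I" and ne: "e \<noteq> e'"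
  shows "branch E A e \<inter> branch E A e' = {}"
proof (rule ccontr)
  assume "branch E A e \<inter> branch E A e' \<noteq> {}"
  then obtain g where g: "g \<in> branch E A e" "g \<in> branch E A e'" by blast
  have "g \<noteq> e" using I_branch[OF e' e] g ne by auto
  moreover have "g \<noteq> e'" using I_branch[OF e e'] g ne by auto
  ultimately have gC: "g \<subseteq> Cu e" "g \<subseteq> Cu e'" "g \<in> E" using g branch_eq e e' by auto
  then obtain x where x: "x \<in> g" using edge_ex by blast
  define u where "u = oth e"
  define u' where "u' = oth e'"
  have eu: "e = {A,u}" "A \<noteq> u" "e' = {A,u'}" "A \<noteq> u'" unfolding u_def u'_def
    by (rule oth1[OF e], rule oth2[OF e], rule oth1[OF e'], rule oth2[OF e'])
  have "(u,x) \<in> (adj (E - {e}))\<^sup>*" using gC x by (auto simp: Cu_def u_def)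
  from cut_lemma[OF this, of A u'] consider
    "(u,x) \<in> (adj (E - {e} - {e'}))\<^sup>*" | "(u,A) \<in> (adj (E - {e} - {e'}))\<^sup>*"
    | "(u,u') \<in> (adj (E - {e} - {e'}))\<^sup>*" using eu by blast
  then show False
  proof cases
    case 1
    have ux: "(u,x) \<in> (adj (E - {e'}))\<^sup>*" using 1 by (rule rtr_mono[rotated]) auto
    have "(u',x) \<in> (adj (E - {e'}))\<^sup>*" using gC x by (auto simp: Cu_def u'_def)
    then have "(u',u) \<in> (adj (E - {e'}))\<^sup>*" using ux rtr_sym by (meson rtrancl_trans)
    moreover have "(u,A) \<in> adj (E - {e'})" using eu ne IE[OF e] by (auto simp: adj_def insert_commute)
    ultimately have "A \<in> Cu e'" by (auto simp: Cu_def u'_def)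
    then show False using A_notin_C[OF e'] by simp
  next
    case 2
    then have "A \<in> Cu e" unfolding Cu_def u_def[symmetric] by (auto intro: rtr_mono[rotated])
    then show False using A_notin_C[OF e] by simp
  next
    case 3
    then have "(u,u') \<in> (adj (E - {e}))\<^sup>*" by (rule rtr_mono[rotated]) auto
    moreover have "(u',A) \<in> adj (E - {e})" using eu ne IE[OF e'] by (auto simp: adj_def insert_commute)
    ultimately have "A \<in> Cu e" by (auto simp: Cu_def u_def)
    then show False using A_notin_C[OF e] by simp
  qed
qed

lemma vert_cover: assumes "(A,x) \<in> (adj E)\<^sup>*" "x \<noteq> A" shows "\<exists>e\<in>I. x \<in> Cu e"
  using assms
proof (induction rule: rtrancl_induct)
  case base then show ?case by simp
next
  case (step b b')
  have ed: "{b,b'} \<in> E" using step.hyps(2) by (simp add: adj_def)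
  show ?case
  proof (cases "b = A")
    case True
    then have eI: "{A,b'} \<in> I" using ed by (simp add: incident_def)
    have "oth {A,b'} = b'" using oth_eq[OF eI] step.prems by simp
    then show ?thesis using eI oth_C by metis
  next
    case False
    then obtain e where e: "e \<in> I" "b \<in> Cu e" using step.IH by blast
    show ?thesis
    proof (cases "{b,b'} = e")
      case True
      have "e = {A, oth e}" by (rule oth1[OF e(1)])
      then have "b' = oth e" using True step.prems False by (auto simp: doubleton_eq_iff)
      then show ?thesis using e oth_C by metis
    next
      case False
      then show ?thesis using C_edge[OF ed False] e by auto
    qed
  qed
qed

lemma branch_cover: assumes g: "g \<in> E" shows "\<exists>e\<in>I. g \<in> branch E A e"
proof (cases "A \<in> g")
  case True
  then have "g \<in> I" using g by (simp add: incident_def)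
  then show ?thesis using e_in_branch by blast
next
  case False
  obtain x where x: "x \<in> g" using g edge_ex by blast
  have "x \<in> V" using x g EPow by auto
  then obtain e where e: "e \<in> I" "x \<in> Cu e" using vert_cover reachA False x by metis
  have "g \<noteq> e" using False oth1[OF e(1)] by auto
  then have "g \<subseteq> Cu e" using C_edge_sub g x e by blast
  then show ?thesis using e branch_eq g \<open>g \<noteq> e\<close> by auto
qed

lemma union_branches: "E = (\<Union>e\<in>I. branch E A e)"
  using branch_cover branch_sub by blast

lemma finI: "finite I" using finE by (simp add: incident_def)

lemma subtree_contains: assumes e: "e \<in> I" and F: "F \<in> subtrees_at (branch E A e) A" shows "e \<in> F"
proof -
  obtain g where g: "g \<in> F" "A \<in> g" using F by (auto simp: subtrees_at_def)
  have "g \<in> branch E A e" using F g by (auto simp: subtrees_at_def)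
  moreover then have "g \<in> I" using g branch_sub[OF e] by (auto simp: incident_def)
  ultimately show ?thesis using I_branch[OF e] g by auto
qed

lemma decomp:
  assumes H: "H \<in> subtrees_at E A" and e: "e \<in> I" and ne: "H \<inter> branch E A e \<noteq> {}"
  shows "H \<inter> branch E A e \<in> subtrees_at (branch E A e) A"
proof -
  define u where "u = oth e"
  have eu: "e = {A,u}" "A \<noteq> u" unfolding u_def by (rule oth1[OF e], rule oth2[OF e])
  let ?He = "H \<inter> branch E A e"
  have HE: "H \<subseteq> E" using H by (auto simp: subtrees_at_def)
  have L: "(A,b) \<in> (adj ?He)\<^sup>*" if "(A,b) \<in> (adj H)\<^sup>*" "b \<in> Cu e" for b
    using that
  proof (induction arbitrary: rule: rtrancl_induct)
    case base then show ?case by simp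
  next
    case (step b b')
    have ed: "{b,b'} \<in> H" using step.hyps(2) by (simp add: adj_def)
    show ?case
    proof (cases "b \<in> Cu e")
      case True
      have ne: "{b,b'} \<noteq> e" using eu True step.prems A_notin_C[OF e] by (auto simp: doubleton_eq_iff)
      then have "{b,b'} \<in> branch E A e" using branch_eq[OF e] C_edge_sub[of "{b,b'}" e b] ed HE True by auto
      then have "(b,b') \<in> adj ?He" using ed by (auto simp: adj_def)
      then show ?thesis using step.IH True by (meson rtrancl_into_rtrancl)
    next
      case False
      have "{b,b'} = e" using C_edge[of b b' e] ed HE False step.prems by auto
      have uC: "u \<in> Cu e" unfolding u_def by (rule oth_C)
      then have "b = A" "b' = u" using False \<open>{b,b'} = e\<close> eu by (auto simp: doubleton_eq_iff)
      moreover have "e \<in> ?He" using \<open>{b,b'} = e\<close> ed e_in_branch[OF e] by auto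
      ultimately show ?thesis using eu by (intro adj_edge) auto
    qed
  qed
  have AH: "A \<in> \<Union>H" and cH: "connected_graph (\<Union>H) H" using H by (auto simp: subtrees_at_def)
  have reach: "(A,x) \<in> (adj ?He)\<^sup>*" if "x \<in> \<Union>?He" for x
  proof -
    have "x \<in> insert A (Cu e)" using that branch_verts[OF e] by auto
    moreover have "(A,x) \<in> (adj H)\<^sup>*" using that AH cH by (auto simp: connected_graph_def)
    ultimately show ?thesis using L by auto
  qed
  have AHe: "A \<in> \<Union>?He"
  proof -
    obtain g where g: "g \<in> ?He" using ne by blast
    obtain x where x: "x \<in> g" using g HE edge_ex by blast
    show ?thesis
    proof (cases "x = A")
      case True then show ?thesis using g x by blast
    next
      case False then show ?thesis using rtr_vert[OF reach[of x]] g x by blast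
    qed
  qed
  have "connected_graph (\<Union>?He) ?He" using conn_from[OF AHe] reach by blast
  then show ?thesis using AHe ne by (auto simp: subtrees_at_def)
qed

lemma compose:
  assumes HE: "H \<subseteq> E" and ne: "H \<noteq> {}"
    and parts: "\<forall>e\<in>I. H \<inter> branch E A e = {} \<or> H \<inter> branch E A e \<in> subtrees_at (branch E A e) A"
  shows "H \<in> subtrees_at E A"
proof -
  have reach: "(A,x) \<in> (adj H)\<^sup>*" "A \<in> \<Union>H" if xH: "x \<in> \<Union>H" for x
  proof -
    obtain g where g: "g \<in> H" "x \<in> g" using xH by blast
    then obtain e where e: "e \<in> I" "g \<in> branch E A e" using branch_cover HE by blast
    then have S: "H \<inter> branch E A e \<in> subtrees_at (branch E A e) A" using parts g by blast
    have "(A,x) \<in> (adj (H \<inter> branch E A e))\<^sup>*" using S g e by (auto simp: subtrees_at_def connected_graph_def)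
    then show "(A,x) \<in> (adj H)\<^sup>*" by (rule rtr_mono[rotated]) auto
    show "A \<in> \<Union>H" using S by (auto simp: subtrees_at_def)
  qed
  obtain g where g: "g \<in> H" using ne by blast
  then obtain x where "x \<in> g" using HE edge_ex by blast
  then have AH: "A \<in> \<Union>H" using reach(2) g by blast
  show ?thesis using conn_from[OF AH] reach AH HE ne by (auto simp: subtrees_at_def)
qed

end

lemma alt_pow: "finite X \<Longrightarrow> (\<Sum>D\<in>Pow X. (-1::int) ^ card D) = (if X = {} then 1 else 0)"
proof -
  assume X: "finite X"
  have "(\<Prod>x\<in>X. (-1::int) + 1) = (\<Sum>D\<in>Pow X. (\<Prod>x\<in>D. -1) * (\<Prod>x\<in>X-D. 1))"
    by (rule prod_add[OF X])
  then have "(\<Sum>D\<in>Pow X. (-1::int) ^ card D) = (\<Prod>x\<in>X. (-1::int) + 1)" by simp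
  also have "\<dots> = (if X = {} then 1 else 0)" using X by (simp add: prod_zero_iff card_gt_0_iff)
  finally show ?thesis .
qed

lemma prod_one_plus:
  fixes z :: "'a \<Rightarrow> int"
  shows "finite X \<Longrightarrow> (\<Prod>e\<in>X. 1 + z e) = (\<Sum>S\<in>Pow X. \<Prod>e\<in>S. z e)"
  using prod_add[of X z "\<lambda>_. 1"] by (simp add: add.commute)

lemma AL:
  fixes z :: "'a \<Rightarrow> int"
  assumes R: "finite R"
  shows "(\<Sum>d\<in>R. \<Prod>e\<in>R-{d}. 1 + z e) = (\<Sum>j\<in>{0..<card R}. int (card R - j) * esym j z R)"
proof -
  define P where "P S = (\<Prod>e\<in>S. z e)" for S
  have fP: "finite (Pow R)" using R by simp
  have "(\<Sum>d\<in>R. \<Prod>e\<in>R-{d}. 1 + z e) = (\<Sum>d\<in>R. \<Sum>S\<in>Pow (R-{d}). P S)"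
    using R by (simp add: prod_one_plus P_def)
  also have "\<dots> = (\<Sum>d\<in>R. \<Sum>S\<in>Pow R. if d \<notin> S then P S else 0)"
  proof (rule sum.cong[OF refl])
    fix d assume "d \<in> R"
    have "Pow (R-{d}) = {S\<in>Pow R. d \<notin> S}" by auto
    then show "(\<Sum>S\<in>Pow (R-{d}). P S) = (\<Sum>S\<in>Pow R. if d \<notin> S then P S else 0)"
      using sum.inter_filter[OF fP, of P "\<lambda>S. d \<notin> S"] by simp
  qed
  also have "\<dots> = (\<Sum>S\<in>Pow R. \<Sum>d\<in>R. if d \<notin> S then P S else 0)" by (rule sum.swap)
  also have "\<dots> = (\<Sum>S\<in>Pow R. int (card R - card S) * P S)"
  proof (rule sum.cong[OF refl])
    fix S assume S: "S \<in> Pow R"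
    have "(\<Sum>d\<in>R. if d \<notin> S then P S else 0) = (\<Sum>d\<in>{d\<in>R. d \<notin> S}. P S)"
      using sum.inter_filter[OF R, of "\<lambda>_. P S" "\<lambda>d. d \<notin> S"] by simp
    also have "{d\<in>R. d \<notin> S} = R - S" by auto
    also have "(\<Sum>d\<in>R - S. P S) = int (card (R - S)) * P S" by simp
    also have "card (R - S) = card R - card S" using S R by (auto intro: card_Diff_subset finite_subset)
    finally show "(\<Sum>d\<in>R. if d \<notin> S then P S else 0) = int (card R - card S) * P S" by simp
  qed
  also have "\<dots> = (\<Sum>j\<in>{0..<Suc (card R)}. \<Sum>S\<in>{S\<in>Pow R. card S = j}. int (card R - card S) * P S)"
  proof (rule sum.group[symmetric, OF fP])
    show "finite {0..<Suc (card R)}" by simp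
    show "card ` Pow R \<subseteq> {0..<Suc (card R)}" using R by (auto intro: card_mono simp: less_Suc_eq_le)
  qed
  also have "\<dots> = (\<Sum>j\<in>{0..<Suc (card R)}. int (card R - j) * esym j z R)"
  proof (rule sum.cong[OF refl])
    fix j
    have "{S\<in>Pow R. card S = j} = {S. S \<subseteq> R \<and> card S = j}" by auto
    then show "(\<Sum>S\<in>{S\<in>Pow R. card S = j}. int (card R - card S) * P S) = int (card R - j) * esym j z R"
      unfolding esym_def P_def by (simp add: sum_distrib_left)
  qed
  also have "\<dots> = (\<Sum>j\<in>{0..<card R}. int (card R - j) * esym j z R)"
    by (simp add: sum.atLeast0_lessThan_Suc)
  finally show ?thesis .
qed


lemma card_split_int:
  assumes "finite X"
  shows "int (card X) - int (card {x\<in>X. P x}) = (\<Sum>x\<in>X. if P x then 0 else 1)"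
proof -
  have a: "int (card {x\<in>X. P x}) = (\<Sum>x\<in>X. if P x then 1 else 0)"
    using sum.inter_filter[OF assms, of "\<lambda>_. (1::int)" P] by simp
  have b: "int (card X) = (\<Sum>x\<in>X. 1::int)" by simp
  show ?thesis unfolding a b sum_subtractf[symmetric] by (rule sum.cong) auto
qed

context tree_ctx begin

definition adm :: "'v set set \<Rightarrow> bool" where "adm H \<longleftrightarrow> H = {} \<or> H \<in> subtrees_at E A"
definition wt :: "'v set set \<Rightarrow> int" where
  "wt H = (if adm H then int (card I) - int (card (H \<inter> I)) else 0)"
definition SS where "SS e = insert {} (subtrees_at (branch E A e) A)"
definition Sp where "Sp G e = {X \<in> SS e. G \<inter> branch E A e \<subseteq> X}"
definition Phi :: "('v set \<Rightarrow> 'v set set) \<Rightarrow> 'v set set" where "Phi h = (\<Union>e\<in>I. h e)"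

lemma fin_br: "e \<in> I \<Longrightarrow> finite (branch E A e)" using branch_sub finE finite_subset by blast

lemma SS_sub: "e \<in> I \<Longrightarrow> X \<in> SS e \<Longrightarrow> X \<subseteq> branch E A e"
  by (auto simp: SS_def subtrees_at_def)

lemma fin_ST: "e \<in> I \<Longrightarrow> finite (subtrees_at (branch E A e) A)"
proof -
  assume e: "e \<in> I"
  have "subtrees_at (branch E A e) A \<subseteq> Pow (branch E A e)" by (auto simp: subtrees_at_def)
  then show ?thesis using fin_br[OF e] by (meson finite_Pow_iff finite_subset)
qed

lemma fin_Sp: "e \<in> I \<Longrightarrow> finite (Sp G e)"
  using fin_ST by (simp add: Sp_def SS_def)

lemma Phi_br: assumes h: "h \<in> PiE I (Sp G)" and e: "e \<in> I" shows "Phi h \<inter> branch E A e = h e"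
proof
  have sub: "h e' \<subseteq> branch E A e'" if "e' \<in> I" for e'
    using h that SS_sub by (auto simp: Sp_def PiE_def Pi_def)
  show "Phi h \<inter> branch E A e \<subseteq> h e"
  proof
    fix g assume "g \<in> Phi h \<inter> branch E A e"
    then obtain e' where e': "e' \<in> I" "g \<in> h e'" "g \<in> branch E A e" by (auto simp: Phi_def)
    then have "g \<in> branch E A e'" using sub by blast
    then have "e' = e" using branch_disj[OF e e'(1)] e' by blast
    then show "g \<in> h e" using e' by simp
  qed
  show "h e \<subseteq> Phi h \<inter> branch E A e" using sub[OF e] e by (auto simp: Phi_def)
qed

lemma Phi_I: assumes h: "h \<in> PiE I (Sp G)" shows "Phi h \<inter> I = {e\<in>I. h e \<noteq> {}}"
proof
  show "Phi h \<inter> I \<subseteq> {e\<in>I. h e \<noteq> {}}"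
  proof
    fix g assume g: "g \<in> Phi h \<inter> I"
    then obtain e where e: "e \<in> I" "g \<in> h e" by (auto simp: Phi_def)
    then have "g \<in> branch E A e" using h SS_sub by (auto simp: Sp_def PiE_def Pi_def)
    then have "g = e" using I_branch[OF e(1)] g by blast
    then show "g \<in> {e\<in>I. h e \<noteq> {}}" using e by auto
  qed
  show "{e\<in>I. h e \<noteq> {}} \<subseteq> Phi h \<inter> I"
  proof
    fix e assume e: "e \<in> {e\<in>I. h e \<noteq> {}}"
    then have "h e \<in> subtrees_at (branch E A e) A" using h by (auto simp: Sp_def SS_def PiE_def Pi_def)
    then have "e \<in> h e" using subtree_contains e by blast
    then show "e \<in> Phi h \<inter> I" using e by (auto simp: Phi_def)
  qed
qed

lemma card_Phi: assumes h: "h \<in> PiE I (Sp G)" shows "card (Phi h) = (\<Sum>e\<in>I. card (h e))"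
  unfolding Phi_def
proof (rule card_UN_disjoint[OF finI])
  have sub: "h e' \<subseteq> branch E A e'" if "e' \<in> I" for e'
    using h that SS_sub by (auto simp: Sp_def PiE_def Pi_def)
  show "\<forall>i\<in>I. finite (h i)" using sub fin_br finite_subset by blast
  show "\<forall>i\<in>I. \<forall>j\<in>I. i \<noteq> j \<longrightarrow> h i \<inter> h j = {}" using sub branch_disj by blast
qed

lemma Phi_bij: assumes G: "G \<subseteq> E"
  shows "bij_betw Phi (PiE I (Sp G)) {H\<in>Pow E. G \<subseteq> H \<and> adm H}"
proof (rule bij_betw_imageI)
  show "inj_on Phi (PiE I (Sp G))"
  proof (rule inj_onI)
    fix h h' assume h: "h \<in> PiE I (Sp G)" and h': "h' \<in> PiE I (Sp G)" and eq: "Phi h = Phi h'"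
    show "h = h'"
    proof (rule PiE_ext[OF h h'])
      fix e assume "e \<in> I"
      then show "h e = h' e" using Phi_br[OF h] Phi_br[OF h'] eq by metis
    qed
  qed
  show "Phi ` PiE I (Sp G) = {H\<in>Pow E. G \<subseteq> H \<and> adm H}"
  proof
    show "Phi ` PiE I (Sp G) \<subseteq> {H\<in>Pow E. G \<subseteq> H \<and> adm H}"
    proof
      fix H assume "H \<in> Phi ` PiE I (Sp G)"
      then obtain h where h: "h \<in> PiE I (Sp G)" and H: "H = Phi h" by blast
      have sub: "h e' \<subseteq> branch E A e'" if "e' \<in> I" for e'
        using h that SS_sub by (auto simp: Sp_def PiE_def Pi_def)
      have HE: "H \<subseteq> E" using sub branch_sub by (auto simp: H Phi_def)
      have GH: "G \<subseteq> H"
      proof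
        fix g assume "g \<in> G"
        then obtain e where e: "e \<in> I" "g \<in> branch E A e" using branch_cover G by blast
        then have "g \<in> h e" using h \<open>g \<in> G\<close> by (auto simp: Sp_def PiE_def Pi_def)
        then show "g \<in> H" using e by (auto simp: H Phi_def)
      qed
      have "adm H"
      proof (cases "H = {}")
        case False
        have "\<forall>e\<in>I. H \<inter> branch E A e = {} \<or> H \<inter> branch E A e \<in> subtrees_at (branch E A e) A"
        proof
          fix e assume e: "e \<in> I"
          have "H \<inter> branch E A e = h e" using Phi_br[OF h e] H by simp
          moreover have "h e \<in> SS e" using h e by (auto simp: Sp_def PiE_def Pi_def)
          ultimately show "H \<inter> branch E A e = {} \<or> H \<inter> branch E A e \<in> subtrees_at (branch E A e) A"
            by (simp add: SS_def)
        qed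
        then show ?thesis using compose[OF HE False] by (simp add: adm_def)
      qed (simp add: adm_def)
      then show "H \<in> {H\<in>Pow E. G \<subseteq> H \<and> adm H}" using HE GH by simp
    qed
    show "{H\<in>Pow E. G \<subseteq> H \<and> adm H} \<subseteq> Phi ` PiE I (Sp G)"
    proof
      fix H assume H: "H \<in> {H\<in>Pow E. G \<subseteq> H \<and> adm H}"
      define h where "h = restrict (\<lambda>e. H \<inter> branch E A e) I"
      have "h \<in> PiE I (Sp G)"
      proof -
        have "H \<inter> branch E A e \<in> Sp G e" if e: "e \<in> I" for e
        proof (cases "H \<inter> branch E A e = {}")
          case True then show ?thesis using H by (auto simp: Sp_def SS_def)
        next
          case False
          then have "H \<noteq> {}" by auto
          then have "H \<in> subtrees_at E A" using H by (auto simp: adm_def)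
          then have "H \<inter> branch E A e \<in> subtrees_at (branch E A e) A" using decomp e False by blast
          then show ?thesis using H by (auto simp: Sp_def SS_def)
        qed
        then show ?thesis by (simp add: h_def)
      qed
      moreover have "Phi h = H"
      proof -
        have "Phi h = (\<Union>e\<in>I. H \<inter> branch E A e)" by (simp add: Phi_def h_def)
        also have "\<dots> = H \<inter> (\<Union>e\<in>I. branch E A e)" by blast
        also have "\<dots> = H" using union_branches H by auto
        finally show ?thesis .
      qed
      ultimately show "H \<in> Phi ` PiE I (Sp G)" by blast
    qed
  qed
qed

end

context tree_ctx begin

lemma a_R: assumes e: "e \<in> I" and Ge: "G \<inter> branch E A e = {}"
  shows "(\<Sum>X\<in>Sp G e. (-1::int) ^ card X) = 1 + zz (branch E A e) {} A"
proof -
  have "Sp G e = insert {} (subtrees_at (branch E A e) A)" using Ge by (auto simp: Sp_def SS_def)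
  moreover have "{} \<notin> subtrees_at (branch E A e) A" by (simp add: subtrees_at_def)
  ultimately show ?thesis using fin_ST[OF e] by (simp add: zz_def)
qed

lemma a_K: assumes e: "e \<in> I" and Ge: "G \<inter> branch E A e \<noteq> {}"
  shows "(\<Sum>X\<in>Sp G e. (-1::int) ^ card X) = (-1) ^ card (G \<inter> branch E A e) * zz (branch E A e) (G \<inter> branch E A e) A"
proof -
  have "Sp G e = {F \<in> subtrees_at (branch E A e) A. G \<inter> branch E A e \<subseteq> F}" using Ge by (auto simp: Sp_def SS_def)
  moreover have "(-1::int) ^ card (G \<inter> branch E A e) * (-1) ^ card (G \<inter> branch E A e) = 1"
    by (simp add: power_add[symmetric])
  ultimately show ?thesis unfolding zz_def mult.assoc[symmetric] by simp
qed

lemma fin_PiE: "finite (PiE I (Sp G))" using finI fin_Sp by (simp add: finite_PiE)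

lemma s5:
  assumes d: "d \<in> I"
  shows "(\<Sum>h\<in>PiE I (Sp G). if h d = {} then (\<Prod>e\<in>I. (-1::int) ^ card (h e)) else 0)
       = (if G \<inter> branch E A d = {} then (\<Prod>e\<in>I-{d}. \<Sum>X\<in>Sp G e. (-1::int) ^ card X) else 0)"
proof (cases "G \<inter> branch E A d = {}")
  case False
  have "h d \<noteq> {}" if "h \<in> PiE I (Sp G)" for h
    using that d False by (auto simp: Sp_def PiE_def Pi_def)
  then have "(\<Sum>h\<in>PiE I (Sp G). if h d = {} then (\<Prod>e\<in>I. (-1::int) ^ card (h e)) else 0) = 0"
    by (intro sum.neutral) auto
  then show ?thesis using False by simp
next
  case True
  define Sp' where "Sp' e = (if e = d then {{}} else Sp G e)" for e
  have "(\<Sum>h\<in>PiE I (Sp G). if h d = {} then (\<Prod>e\<in>I. (-1::int) ^ card (h e)) else 0)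
      = (\<Sum>h\<in>{h\<in>PiE I (Sp G). h d = {}}. (\<Prod>e\<in>I. (-1::int) ^ card (h e)))"
    by (rule sum.inter_filter[OF fin_PiE, symmetric])
  also have "{h\<in>PiE I (Sp G). h d = {}} = PiE I Sp'"
  proof -
    have "{} \<in> Sp G d" using True by (simp add: Sp_def SS_def)
    then show ?thesis using d unfolding Sp'_def PiE_def Pi_def by auto
  qed
  also have "(\<Sum>h\<in>PiE I Sp'. (\<Prod>e\<in>I. (-1::int) ^ card (h e))) = (\<Prod>e\<in>I. \<Sum>X\<in>Sp' e. (-1::int) ^ card X)"
    by (rule prod_sum_PiE[symmetric]) (use finI fin_Sp in \<open>auto simp: Sp'_def\<close>)
  also have "\<dots> = (\<Sum>X\<in>Sp' d. (-1::int) ^ card X) * (\<Prod>e\<in>I-{d}. \<Sum>X\<in>Sp' e. (-1::int) ^ card X)"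
    using d finI by (simp add: prod.remove)
  also have "\<dots> = (\<Prod>e\<in>I-{d}. \<Sum>X\<in>Sp G e. (-1::int) ^ card X)"
    by (simp add: Sp'_def)
  finally show ?thesis using True by simp
qed


lemma card_G_split:
  assumes G: "G \<subseteq> E"
  shows "card G = (\<Sum>e\<in>{e\<in>I. G \<inter> branch E A e \<noteq> {}}. card (G \<inter> branch E A e))"
proof -
  have GU: "G = (\<Union>e\<in>I. G \<inter> branch E A e)" using union_branches G by blast
  have "card (\<Union>e\<in>I. G \<inter> branch E A e) = (\<Sum>e\<in>I. card (G \<inter> branch E A e))"
  proof (rule card_UN_disjoint[OF finI])
    show "\<forall>i\<in>I. finite (G \<inter> branch E A i)" using fin_br by blast
    show "\<forall>i\<in>I. \<forall>j\<in>I. i \<noteq> j \<longrightarrow> G \<inter> branch E A i \<inter> (G \<inter> branch E A j) = {}"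
      using branch_disj by blast
  qed
  then have "card G = (\<Sum>e\<in>I. card (G \<inter> branch E A e))" using GU by simp
  also have "\<dots> = (\<Sum>e\<in>I. if G \<inter> branch E A e \<noteq> {} then card (G \<inter> branch E A e) else 0)"
    by (rule sum.cong) auto
  also have "\<dots> = (\<Sum>e\<in>{e\<in>I. G \<inter> branch E A e \<noteq> {}}. card (G \<inter> branch E A e))"
    by (rule sum.inter_filter[OF finI, symmetric])
  finally show ?thesis .
qed

lemma Z:
  assumes G: "G \<subseteq> E"
  shows "(\<Sum>H\<in>{H\<in>Pow E. G \<subseteq> H}. (-1::int) ^ card H * wt H) = (-1) ^ card G * coeff E A G"
proof -
  define f where "f h = (\<Prod>e\<in>I. (-1::int) ^ card (h e))" for h :: "'v set \<Rightarrow> 'v set set"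
  define a where "a e = (\<Sum>X\<in>Sp G e. (-1::int) ^ card X)" for e
  define zf where "zf e = zz (branch E A e) {} A" for e
  define K where "K = {e\<in>I. G \<inter> branch E A e \<noteq> {}}"
  define R where "R = {e\<in>I. G \<inter> branch E A e = {}}"
  have finB: "finite {H\<in>Pow E. G \<subseteq> H}" using finE by simp
  have finK: "finite K" "finite R" using finI by (auto simp: K_def R_def)
  have "(\<Sum>H\<in>{H\<in>Pow E. G \<subseteq> H}. (-1::int) ^ card H * wt H)
      = (\<Sum>H\<in>{H\<in>Pow E. G \<subseteq> H}. if adm H then (-1::int) ^ card H * (int (card I) - int (card (H \<inter> I))) else 0)"
    by (rule sum.cong) (auto simp: wt_def)
  also have "\<dots> = (\<Sum>H\<in>{H\<in>{H\<in>Pow E. G \<subseteq> H}. adm H}. (-1::int) ^ card H * (int (card I) - int (card (H \<inter> I))))"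
    by (rule sum.inter_filter[OF finB, symmetric])
  also have "{H\<in>{H\<in>Pow E. G \<subseteq> H}. adm H} = {H\<in>Pow E. G \<subseteq> H \<and> adm H}" by auto
  also have "(\<Sum>H\<in>{H\<in>Pow E. G \<subseteq> H \<and> adm H}. (-1::int) ^ card H * (int (card I) - int (card (H \<inter> I))))
      = (\<Sum>h\<in>PiE I (Sp G). (-1::int) ^ card (Phi h) * (int (card I) - int (card (Phi h \<inter> I))))"
    by (rule sum.reindex_bij_betw[OF Phi_bij[OF G], symmetric])
  also have "\<dots> = (\<Sum>h\<in>PiE I (Sp G). f h * (\<Sum>d\<in>I. if h d = {} then 1 else 0))"
  proof (rule sum.cong[OF refl])
    fix h assume h: "h \<in> PiE I (Sp G)"
    have "(-1::int) ^ card (Phi h) = f h" unfolding card_Phi[OF h] f_def by (rule power_sum)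
    moreover have "int (card I) - int (card (Phi h \<inter> I)) = (\<Sum>d\<in>I. if h d = {} then 1 else 0)"
      unfolding Phi_I[OF h] card_split_int[OF finI] by (rule sum.cong) auto
    ultimately show "(-1::int) ^ card (Phi h) * (int (card I) - int (card (Phi h \<inter> I)))
        = f h * (\<Sum>d\<in>I. if h d = {} then 1 else 0)" by simp
  qed
  also have "\<dots> = (\<Sum>h\<in>PiE I (Sp G). \<Sum>d\<in>I. if h d = {} then f h else 0)"
    by (rule sum.cong) (auto simp: sum_distrib_left intro: sum.cong)
  also have "\<dots> = (\<Sum>d\<in>I. \<Sum>h\<in>PiE I (Sp G). if h d = {} then f h else 0)"
    by (rule sum.swap)
  also have "\<dots> = (\<Sum>d\<in>I. if G \<inter> branch E A d = {} then (\<Prod>e\<in>I-{d}. a e) else 0)"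
    unfolding f_def a_def by (rule sum.cong[OF refl]) (rule s5)
  also have "\<dots> = (\<Sum>d\<in>R. \<Prod>e\<in>I-{d}. a e)"
    unfolding R_def by (rule sum.inter_filter[OF finI, symmetric])
  also have "\<dots> = (\<Sum>d\<in>R. (\<Prod>e\<in>K. a e) * (\<Prod>e\<in>R-{d}. 1 + zf e))"
  proof (rule sum.cong[OF refl])
    fix d assume d: "d \<in> R"
    have "I - {d} = K \<union> (R - {d})" using d by (auto simp: K_def R_def)
    moreover have "K \<inter> (R - {d}) = {}" by (auto simp: K_def R_def)
    ultimately have "(\<Prod>e\<in>I-{d}. a e) = (\<Prod>e\<in>K. a e) * (\<Prod>e\<in>R-{d}. a e)"
      using finK by (simp add: prod.union_disjoint)
    also have "(\<Prod>e\<in>R-{d}. a e) = (\<Prod>e\<in>R-{d}. 1 + zf e)"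
      by (rule prod.cong[OF refl]) (auto simp: a_def zf_def R_def intro: a_R)
    finally show "(\<Prod>e\<in>I-{d}. a e) = (\<Prod>e\<in>K. a e) * (\<Prod>e\<in>R-{d}. 1 + zf e)" .
  qed
  also have "\<dots> = (\<Prod>e\<in>K. a e) * (\<Sum>j\<in>{0..<card R}. int (card R - j) * esym j zf R)"
    by (simp add: sum_distrib_left[symmetric] AL[OF finK(2)])
  also have "(\<Prod>e\<in>K. a e) = (-1) ^ card G * (\<Prod>e\<in>K. zz (branch E A e) (G \<inter> branch E A e) A)"
  proof -
    have "(\<Prod>e\<in>K. a e) = (\<Prod>e\<in>K. (-1) ^ card (G \<inter> branch E A e) * zz (branch E A e) (G \<inter> branch E A e) A)"
      by (rule prod.cong[OF refl]) (auto simp: a_def K_def intro: a_K)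
    also have "\<dots> = (\<Prod>e\<in>K. (-1::int) ^ card (G \<inter> branch E A e)) * (\<Prod>e\<in>K. zz (branch E A e) (G \<inter> branch E A e) A)"
      by (rule prod.distrib)
    also have "(\<Prod>e\<in>K. (-1::int) ^ card (G \<inter> branch E A e)) = (-1) ^ card G"
      unfolding card_G_split[OF G] K_def by (rule power_sum[symmetric])
    finally show ?thesis .
  qed
  also have "(-1) ^ card G * (\<Prod>e\<in>K. zz (branch E A e) (G \<inter> branch E A e) A) * (\<Sum>j\<in>{0..<card R}. int (card R - j) * esym j zf R)
      = (-1) ^ card G * coeff E A G"
  proof -
    have RK: "R = I - K" by (auto simp: K_def R_def)
    have "card R = card I - card K" unfolding RK by (rule card_Diff_subset) (use finK in \<open>auto simp: K_def\<close>)
    then show ?thesis unfolding coeff_def Let_def K_def[symmetric] RK[symmetric] zf_def[symmetric]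
      by (simp add: mult.assoc)
  qed
  finally show ?thesis .
qed

end

context tree_ctx begin

lemma alt2:
  assumes H: "H \<subseteq> E" and H': "H' \<subseteq> E"
  shows "(\<Sum>G\<in>Pow E. if H \<subseteq> G \<and> G \<subseteq> H' then (-1::int) ^ card G else 0) = (if H' = H then (-1) ^ card H else 0)"
proof -
  have finP: "finite (Pow E)" using finE by simp
  have "(\<Sum>G\<in>Pow E. if H \<subseteq> G \<and> G \<subseteq> H' then (-1::int) ^ card G else 0)
      = (\<Sum>G\<in>{G\<in>Pow E. H \<subseteq> G \<and> G \<subseteq> H'}. (-1::int) ^ card G)"
    by (rule sum.inter_filter[OF finP, symmetric])
  also have "{G\<in>Pow E. H \<subseteq> G \<and> G \<subseteq> H'} = {G. H \<subseteq> G \<and> G \<subseteq> H'}" using H' by auto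
  finally have eq: "(\<Sum>G\<in>Pow E. if H \<subseteq> G \<and> G \<subseteq> H' then (-1::int) ^ card G else 0)
      = (\<Sum>G\<in>{G. H \<subseteq> G \<and> G \<subseteq> H'}. (-1::int) ^ card G)" .
  show ?thesis
  proof (cases "H \<subseteq> H'")
    case False
    then have e0: "{G. H \<subseteq> G \<and> G \<subseteq> H'} = {}" by auto
    have "H' \<noteq> H" using False by auto
    then show ?thesis unfolding eq e0 by simp
  next
    case True
    have finH': "finite H'" using H' finE finite_subset by blast
    have finH: "finite H" using H finE finite_subset by blast
    have img: "{G. H \<subseteq> G \<and> G \<subseteq> H'} = (\<lambda>D. H \<union> D) ` Pow (H' - H)" using True by auto
    have inj: "inj_on (\<lambda>D. H \<union> D) (Pow (H' - H))" by (rule inj_onI) auto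
    have "(\<Sum>G\<in>{G. H \<subseteq> G \<and> G \<subseteq> H'}. (-1::int) ^ card G) = (\<Sum>D\<in>Pow (H' - H). (-1::int) ^ card (H \<union> D))"
      unfolding img by (rule sum.reindex[OF inj, unfolded comp_def])
    also have "\<dots> = (\<Sum>D\<in>Pow (H' - H). (-1::int) ^ card H * (-1) ^ card D)"
    proof (rule sum.cong[OF refl])
      fix D assume D: "D \<in> Pow (H' - H)"
      then have "finite D" using finH' finite_subset by blast
      then have "card (H \<union> D) = card H + card D" using D finH by (intro card_Un_disjoint) auto
      then show "(-1::int) ^ card (H \<union> D) = (-1) ^ card H * (-1) ^ card D" by (simp add: power_add)
    qed
    also have "\<dots> = (-1) ^ card H * (if H' - H = {} then 1 else 0)"
      by (simp add: sum_distrib_left[symmetric] alt_pow finH')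
    also have "\<dots> = (if H' = H then (-1) ^ card H else 0)" using True by auto
    finally show ?thesis using eq by simp
  qed
qed

lemma key:
  assumes H: "H \<subseteq> E"
  shows "(\<Sum>G\<in>{G\<in>Pow E. H \<subseteq> G}. coeff E A G) = wt H"
proof -
  define x where "x H' = (-1::int) ^ card H' * wt H'" for H'
  have finP: "finite (Pow E)" using finE by simp
  have c: "coeff E A G = (-1) ^ card G * (\<Sum>H'\<in>{H'\<in>Pow E. G \<subseteq> H'}. x H')" if G: "G \<subseteq> E" for G
  proof -
    have "(-1::int) ^ card G * (-1) ^ card G = 1" by (simp add: power_add[symmetric])
    then show ?thesis using Z[OF G] unfolding x_def by (simp add: mult.assoc[symmetric])
  qed
  have "(\<Sum>G\<in>{G\<in>Pow E. H \<subseteq> G}. coeff E A G)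
      = (\<Sum>G\<in>{G\<in>Pow E. H \<subseteq> G}. (-1) ^ card G * (\<Sum>H'\<in>{H'\<in>Pow E. G \<subseteq> H'}. x H'))"
    by (rule sum.cong[OF refl]) (rule c, simp)
  also have "\<dots> = (\<Sum>G\<in>Pow E. if H \<subseteq> G then (-1) ^ card G * (\<Sum>H'\<in>{H'\<in>Pow E. G \<subseteq> H'}. x H') else 0)"
    by (rule sum.inter_filter[OF finP])
  also have "\<dots> = (\<Sum>G\<in>Pow E. \<Sum>H'\<in>Pow E. if H \<subseteq> G \<and> G \<subseteq> H' then (-1) ^ card G * x H' else 0)"
  proof (rule sum.cong[OF refl])
    fix G assume "G \<in> Pow E"
    show "(if H \<subseteq> G then (-1) ^ card G * (\<Sum>H'\<in>{H'\<in>Pow E. G \<subseteq> H'}. x H') else 0)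
        = (\<Sum>H'\<in>Pow E. if H \<subseteq> G \<and> G \<subseteq> H' then (-1) ^ card G * x H' else 0)"
    proof (cases "H \<subseteq> G")
      case True
      have s1: "(\<Sum>H'\<in>{H'\<in>Pow E. G \<subseteq> H'}. x H') = (\<Sum>H'\<in>Pow E. if G \<subseteq> H' then x H' else 0)"
        by (rule sum.inter_filter[OF finP])
      have "(-1)^card G * (\<Sum>H'\<in>Pow E. if G \<subseteq> H' then x H' else 0) = (\<Sum>H'\<in>Pow E. (-1)^card G * (if G \<subseteq> H' then x H' else 0))"
        by (rule sum_distrib_left)
      also have "\<dots> = (\<Sum>H'\<in>Pow E. if H \<subseteq> G \<and> G \<subseteq> H' then (-1)^card G * x H' else 0)"
        using True by (intro sum.cong refl) simp
      finally show ?thesis using True s1 by simp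
    qed simp
  qed
  also have "\<dots> = (\<Sum>H'\<in>Pow E. \<Sum>G\<in>Pow E. if H \<subseteq> G \<and> G \<subseteq> H' then (-1) ^ card G * x H' else 0)"
    by (rule sum.swap)
  also have "\<dots> = (\<Sum>H'\<in>Pow E. x H' * (if H' = H then (-1) ^ card H else 0))"
  proof (rule sum.cong[OF refl])
    fix H' assume H': "H' \<in> Pow E"
    have "(\<Sum>G\<in>Pow E. if H \<subseteq> G \<and> G \<subseteq> H' then (-1) ^ card G * x H' else 0)
        = x H' * (\<Sum>G\<in>Pow E. if H \<subseteq> G \<and> G \<subseteq> H' then (-1::int) ^ card G else 0)"
      unfolding sum_distrib_left by (rule sum.cong) auto
    then show "(\<Sum>G\<in>Pow E. if H \<subseteq> G \<and> G \<subseteq> H' then (-1) ^ card G * x H' else 0)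
        = x H' * (if H' = H then (-1) ^ card H else 0)" using alt2[OF H] H' by simp
  qed
  also have "\<dots> = x H * (-1) ^ card H"
  proof -
    have "(\<Sum>H'\<in>Pow E. x H' * (if H' = H then (-1) ^ card H else 0)) = (\<Sum>H'\<in>Pow E. if H' = H then x H * (-1) ^ card H else 0)"
    proof (rule sum.cong[OF refl])
      fix H' show "x H' * (if H' = H then (-1) ^ card H else 0) = (if H' = H then x H * (-1) ^ card H else 0)"
        by (cases "H' = H") simp_all
    qed
    also have "\<dots> = (if H \<in> Pow E then x H * (-1) ^ card H else 0)" by (rule sum.delta[OF finP])
    also have "\<dots> = x H * (-1) ^ card H" using H by simp
    finally show ?thesis .
  qed
  also have "\<dots> = wt H"
  proof -
    have "(-1::int) ^ card H * (-1) ^ card H = 1" by (simp add: power_add[symmetric])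
    then have "x H * (-1) ^ card H = wt H * ((-1::int) ^ card H * (-1) ^ card H)" unfolding x_def by (simp only: ac_simps)
    then show ?thesis using \<open>(-1::int) ^ card H * (-1) ^ card H = 1\<close> by simp
  qed
  finally show ?thesis .
qed

end

locale dyn = tree_ctx V E A for V :: "'v set" and E A +
  fixes t :: "'v set \<Rightarrow> real"
  assumes tpos: "\<forall>e\<in>E. t e > 0" and li: "lin_indep_Q E t"
begin

lemma lin_eq: assumes eq: "time t c = time t c'" and e: "e \<in> E" shows "c e = c' e"
proof -
  define q where "q x = (of_nat (c x) - of_nat (c' x) :: rat)" for x
  have "(\<Sum>x\<in>E. of_rat (q x) * t x) = (\<Sum>x\<in>E. real (c x) * t x - real (c' x) * t x)"
    by (rule sum.cong) (auto simp: q_def of_rat_diff left_diff_distrib)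
  also have "\<dots> = time t c - time t c'" unfolding time_def by (rule sum_subtractf)
  finally have "(\<Sum>x\<in>E. of_rat (q x) * t x) = 0" using eq by simp
  then have "q e = 0" using li e unfolding lin_indep_Q_def by blast
  then show ?thesis by (simp add: q_def)
qed

definition tau :: "('v set \<Rightarrow> nat) \<Rightarrow> real" where
  "tau m = (\<Sum>e\<in>E. 2 * real (m e) * t e)"

lemma tau_time: "tau m = time t (\<lambda>e. 2 * m e)"
  unfolding tau_def time_def by (rule sum.cong) auto

definition QQ :: "real \<Rightarrow> ('v set \<Rightarrow> nat) set" where
  "QQ T = {m \<in> E \<rightarrow>\<^sub>E (UNIV :: nat set). tau m \<le> T}"

lemma finQ: "finite (QQ T)"
proof -
  have "QQ T \<subseteq> PiE E (\<lambda>e. {0..nat \<lceil>T / (2 * t e)\<rceil>})"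
  proof
    fix m assume m: "m \<in> QQ T"
    have "m e \<le> nat \<lceil>T / (2 * t e)\<rceil>" if e: "e \<in> E" for e
    proof -
      have nn: "\<forall>x\<in>E. 0 \<le> 2 * real (m x) * t x" using tpos by auto
      have "2 * real (m e) * t e \<le> tau m" unfolding tau_def
        by (rule member_le_sum[OF e]) (use nn finE in auto)
      also have "\<dots> \<le> T" using m by (simp add: QQ_def)
      finally have "real (m e) * (2 * t e) \<le> T" by (simp add: algebra_simps)
      then have "real (m e) \<le> T / (2 * t e)" using tpos e by (simp add: pos_le_divide_eq)
      also have "\<dots> \<le> real (nat \<lceil>T / (2 * t e)\<rceil>)" by (rule real_nat_ceiling_ge)
      finally show ?thesis by simp
    qed
    then show "m \<in> PiE E (\<lambda>e. {0..nat \<lceil>T / (2 * t e)\<rceil>})" using m by (auto simp: QQ_def PiE_def Pi_def)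
  qed
  moreover have "finite (PiE E (\<lambda>e. {0..nat \<lceil>T / (2 * t e)\<rceil>}))" using finE by (simp add: finite_PiE)
  ultimately show ?thesis by (rule finite_subset)
qed

lemma tau_inj: "inj_on tau (E \<rightarrow>\<^sub>E (UNIV :: nat set))"
proof (rule inj_onI)
  fix m m' assume m: "m \<in> E \<rightarrow>\<^sub>E (UNIV :: nat set)" and m': "m' \<in> E \<rightarrow>\<^sub>E (UNIV :: nat set)"
    and eq: "tau m = tau m'"
  show "m = m'"
  proof (rule PiE_ext[OF m m'])
    fix e assume "e \<in> E"
    moreover have "time t (\<lambda>e. 2 * m e) = time t (\<lambda>e. 2 * m' e)" using eq unfolding tau_time .
    ultimately have "2 * m e = 2 * m' e" using lin_eq by blast
    then show "m e = m' e" by simp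
  qed
qed

lemma A_edge: assumes "E \<noteq> {}" shows "\<exists>x. {A,x} \<in> E"
proof -
  obtain g where g: "g \<in> E" using assms by blast
  then obtain v where v: "v \<in> g" using edge_ex by blast
  show ?thesis
  proof (cases "v = A")
    case True
    then obtain y where "g = {A,y}" using edge_at[OF g v] by blast
    then show ?thesis using g by blast
  next
    case False
    have "v \<in> V" using v g EPow by auto
    then have "(A,v) \<in> (adj E)\<^sup>*" by (rule reachA)
    then have "A \<in> \<Union>E" using rtr_vert False by metis
    then obtain g' where g': "g' \<in> E" "A \<in> g'" by blast
    then obtain y where "g' = {A,y}" using edge_at[OF g'] by blast
    then show ?thesis using g' by blast
  qed
qed

lemma supp2: "supp (\<lambda>e. 2 * m e) = supp m" by (auto simp: supp_def)

lemma dep_char: assumes En: "E \<noteq> {}"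
  shows "{s \<in> dep_times E t A A. s \<le> T} = tau ` {m \<in> QQ T. adm (supp m)}"
proof
  show "{s \<in> dep_times E t A A. s \<le> T} \<subseteq> tau ` {m \<in> QQ T. adm (supp m)}"
  proof
    fix s assume s: "s \<in> {s \<in> dep_times E t A A. s \<le> T}"
    then obtain w where "(A,w,s) \<in> deps E t A" by (auto simp: dep_times_def)
    then obtain c where Wc: "W A c" and sc: "s = time t c" using soundness by blast
    have ev: "even (c e)" if "e \<in> E" for e using Wc that A_in_R by (auto simp: W_def)
    define m where "m = restrict (\<lambda>e. c e div 2) E"
    have "tau m = time t c" unfolding tau_def time_def
      by (rule sum.cong[OF refl]) (auto simp: m_def dest!: ev)
    moreover have "supp m = supp c"
    proof -
      have z: "(c e div 2 = 0) = (c e = 0)" if e: "e \<in> E" for e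
      proof -
        obtain k where "c e = 2 * k" using ev[OF e] by (blast elim: evenE)
        then show ?thesis by simp
      qed
      have z2: "(0 < c e div 2) = (0 < c e)" if e: "e \<in> E" for e using z[OF e] by linarith
      show ?thesis unfolding supp_def m_def using z z2 by auto
    qed
    moreover have "adm (supp c)" using Wc by (auto simp: W_def adm_at_def adm_def)
    moreover have "m \<in> E \<rightarrow>\<^sub>E (UNIV :: nat set)" by (simp add: m_def)
    ultimately have "m \<in> {m \<in> QQ T. adm (supp m)}" "s = tau m" using s sc by (auto simp: QQ_def)
    then show "s \<in> tau ` {m \<in> QQ T. adm (supp m)}" by blast
  qed
  show "tau ` {m \<in> QQ T. adm (supp m)} \<subseteq> {s \<in> dep_times E t A A. s \<le> T}"
  proof
    fix s assume "s \<in> tau ` {m \<in> QQ T. adm (supp m)}"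
    then obtain m where m: "m \<in> QQ T" "adm (supp m)" and s: "s = tau m" by blast
    obtain x where x: "{A,x} \<in> E" using A_edge[OF En] by blast
    have "W A (\<lambda>e. 2 * m e)"
      unfolding W_def supp2 using m(2) A_in_R by (auto simp: adm_def adm_at_def subtrees_at_def)
    from completeness[OF this x] have "(A, x, tau m) \<in> deps E t A" by (simp add: tau_time)
    then show "s \<in> {s \<in> dep_times E t A A. s \<le> T}" using m s by (auto simp: dep_times_def QQ_def)
  qed
qed


lemma arr_char:
  assumes m: "m \<in> QQ T" "adm (supp m)"
  shows "arrivals E t A A (tau m) = card (supp m \<inter> I)"
proof -
  define U where "U = {u. (u, A, tau m - t {u,A}) \<in> deps E t A}"
  have U: "U = {u. {u,A} \<in> E \<and> m {u,A} \<noteq> 0}"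
  proof
    show "U \<subseteq> {u. {u,A} \<in> E \<and> m {u,A} \<noteq> 0}"
    proof
      fix u assume "u \<in> U"
      then have "(u, A, tau m - t {u,A}) \<in> deps E t A" by (simp add: U_def)
      from soundness[OF this] obtain c where g: "{u,A} \<in> E" and Wc: "W u c"
        and sc: "tau m - t {u,A} = time t c" by blast
      have "time t (c({u,A} := Suc (c {u,A}))) = time t c + t {u,A}" using time_upd[OF g] by simp
      also have "\<dots> = time t (\<lambda>e. 2 * m e)" using sc tau_time by simp
      finally have tt: "time t (c({u,A} := Suc (c {u,A}))) = time t (\<lambda>e. 2 * m e)" .
      have "Suc (c {u,A}) = 2 * m {u,A}" using lin_eq[OF tt g] by simp
      then show "u \<in> {u. {u,A} \<in> E \<and> m {u,A} \<noteq> 0}" using g by auto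
    qed
    show "{u. {u,A} \<in> E \<and> m {u,A} \<noteq> 0} \<subseteq> U"
    proof
      fix u assume u: "u \<in> {u. {u,A} \<in> E \<and> m {u,A} \<noteq> 0}"
      define g where "g = {u,A}"
      have gE: "g \<in> E" and mg: "m g \<noteq> 0" using u by (auto simp: g_def)
      have uA: "u \<noteq> A" using edge_other gE g_def by blast
      have gA: "{A,u} \<in> E" using gE g_def by (simp add: insert_commute)
      define c where "c = (\<lambda>e. 2 * m e)(g := 2 * m g - 1)"
      have "W u c"
        unfolding W_def
      proof
        show "\<forall>e\<in>E. odd (c e) = (u \<notin> R e)"
        proof
          fix e assume e: "e \<in> E"
          show "odd (c e) = (u \<notin> R e)"
          proof (cases "e = g")
            case True
            have "u \<notin> R {A,u}" using T1[OF gA uA[symmetric]] A_in_R by blast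
            then show ?thesis using True mg by (simp add: c_def g_def insert_commute)
          next
            case False
            have "u \<in> R e" using T2[OF gA, of e] A_in_R False by (simp add: g_def insert_commute)
            then show ?thesis using False by (simp add: c_def)
          qed
        qed
        have sp: "supp c = supp m" using mg unfolding supp_def c_def by auto
        have "supp m \<noteq> {}" using gE mg by (auto simp: supp_def)
        then have "supp m \<in> subtrees_at E A" using m(2) by (simp add: adm_def)
        moreover have "u \<in> \<Union>(supp m)" using gE mg by (auto simp: supp_def g_def)
        ultimately show "adm_at u (supp c)" unfolding sp by (simp add: adm_at_def)
      qed
      from completeness[OF this gE[unfolded g_def]] have "(u, A, time t c) \<in> deps E t A" .
      moreover have "time t c = tau m - t {u,A}"
        using time_upd[OF gE, of t "\<lambda>e. 2 * m e" "2 * m g - 1"] mg tau_time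
        by (simp add: c_def g_def of_nat_diff algebra_simps)
      ultimately show "u \<in> U" by (simp add: U_def)
    qed
  qed
  have inj: "inj_on (\<lambda>u. {u,A}) U"
  proof (rule inj_onI)
    fix u u' assume "u \<in> U" "u' \<in> U" "{u,A} = {u',A}"
    then show "u = u'" using U edge_other by (auto simp: doubleton_eq_iff)
  qed
  have img: "(\<lambda>u. {u,A}) ` U = supp m \<inter> I"
  proof
    show "(\<lambda>u. {u,A}) ` U \<subseteq> supp m \<inter> I" using U by (auto simp: supp_def incident_def)
    show "supp m \<inter> I \<subseteq> (\<lambda>u. {u,A}) ` U"
    proof
      fix e assume e: "e \<in> supp m \<inter> I"
      have eo: "e = {oth e, A}" using oth1[of e] e by (simp add: insert_commute)
      then have "oth e \<in> U" using U e by (auto simp: supp_def incident_def)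
      then show "e \<in> (\<lambda>u. {u,A}) ` U" using eo by blast
    qed
  qed
  have "arrivals E t A A (tau m) = card U" by (simp add: arrivals_def U_def)
  also have "\<dots> = card (supp m \<inter> I)" using card_image[OF inj] img by simp
  finally show ?thesis .
qed

lemma NN_eq: "NN E t A A T = (\<Sum>m\<in>QQ T. wt (supp m))"
proof (cases "E = {}")
  case True
  have "dep_times E t A A = {}" using soundness True by (auto simp: dep_times_def)
  moreover have "wt H = 0" for H unfolding wt_def incident_def using True by simp
  ultimately show ?thesis by (simp add: NN_def)
next
  case False
  have "NN E t A A T = (\<Sum>s\<in>tau ` {m \<in> QQ T. adm (supp m)}. int (card I) - int (arrivals E t A A s))"
    unfolding NN_def dep_char[OF False] ..
  also have "\<dots> = (\<Sum>m\<in>{m \<in> QQ T. adm (supp m)}. int (card I) - int (arrivals E t A A (tau m)))"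
    by (rule sum.reindex[unfolded comp_def]) (rule inj_on_subset[OF tau_inj], auto simp: QQ_def)
  also have "\<dots> = (\<Sum>m\<in>{m \<in> QQ T. adm (supp m)}. int (card I) - int (card (supp m \<inter> I)))"
  proof (rule sum.cong[OF refl])
    fix m assume "m \<in> {m \<in> QQ T. adm (supp m)}"
    then show "int (card I) - int (arrivals E t A A (tau m)) = int (card I) - int (card (supp m \<inter> I))"
      using arr_char[of m T] by simp
  qed
  also have "\<dots> = (\<Sum>m\<in>QQ T. if adm (supp m) then int (card I) - int (card (supp m \<inter> I)) else 0)"
    by (rule sum.inter_filter[OF finQ])
  also have "\<dots> = (\<Sum>m\<in>QQ T. wt (supp m))" by (simp add: wt_def)
  finally show ?thesis .
qed

lemma lattice_eq:
  assumes G: "G \<subseteq> E"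
  shows "lattice_count t G T = card {m \<in> QQ T. supp m \<subseteq> G}"
proof -
  let ?L = "{f \<in> G \<rightarrow>\<^sub>E (UNIV :: nat set). (\<Sum>e\<in>G. 2 * real (f e) * t e) \<le> T}"
  let ?M = "{m \<in> QQ T. supp m \<subseteq> G}"
  have tauG: "tau m = (\<Sum>e\<in>G. 2 * real (m e) * t e)" if "supp m \<subseteq> G" for m
    unfolding tau_def
  proof (rule sum.mono_neutral_right[OF finE G])
    show "\<forall>e\<in>E - G. 2 * real (m e) * t e = 0" using that by (auto simp: supp_def)
  qed
  have inj: "inj_on (\<lambda>m. restrict m G) ?M"
  proof (rule inj_onI)
    fix m m' assume m: "m \<in> ?M" and m': "m' \<in> ?M" and eq: "restrict m G = restrict m' G"
    show "m = m'"
    proof (rule PiE_ext)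
      show "m \<in> E \<rightarrow>\<^sub>E (UNIV :: nat set)" "m' \<in> E \<rightarrow>\<^sub>E (UNIV :: nat set)" using m m' by (auto simp: QQ_def)
      fix e assume e: "e \<in> E"
      show "m e = m' e"
      proof (cases "e \<in> G")
        case True then show ?thesis using eq by (metis restrict_apply')
      next
        case False
        then have "e \<notin> supp m" "e \<notin> supp m'" using m m' by auto
        then show ?thesis using e by (simp add: supp_def)
      qed
    qed
  qed
  have img: "(\<lambda>m. restrict m G) ` ?M = ?L"
  proof
    show "(\<lambda>m. restrict m G) ` ?M \<subseteq> ?L"
    proof
      fix f assume "f \<in> (\<lambda>m. restrict m G) ` ?M"
      then obtain m where m: "m \<in> ?M" and f: "f = restrict m G" by blast
      have "(\<Sum>e\<in>G. 2 * real (f e) * t e) = tau m" using tauG m f by simp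
      then show "f \<in> ?L" using m f by (auto simp: QQ_def)
    qed
    show "?L \<subseteq> (\<lambda>m. restrict m G) ` ?M"
    proof
      fix f assume f: "f \<in> ?L"
      define m where "m e = (if e \<in> G then f e else if e \<in> E then 0 else undefined)" for e
      have sp: "supp m \<subseteq> G" by (auto simp: supp_def m_def)
      have "m \<in> E \<rightarrow>\<^sub>E (UNIV :: nat set)" using G by (auto simp: m_def PiE_def extensional_def)
      moreover have "tau m \<le> T" using tauG[OF sp] f by (simp add: m_def)
      moreover have "restrict m G = f" using f by (auto simp: m_def restrict_def PiE_def extensional_def)
      ultimately show "f \<in> (\<lambda>m. restrict m G) ` ?M" using sp by (auto simp: QQ_def)
    qed
  qed
  show ?thesis unfolding lattice_count_def img[symmetric] by (rule card_image[OF inj])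
qed

lemma main: "NN E t A A T = (\<Sum>G\<in>Pow E. coeff E A G * int (lattice_count t G T))"
proof -
  have finP: "finite (Pow E)" using finE by simp
  have "(\<Sum>G\<in>Pow E. coeff E A G * int (lattice_count t G T))
      = (\<Sum>G\<in>Pow E. coeff E A G * (\<Sum>m\<in>QQ T. if supp m \<subseteq> G then 1 else 0))"
  proof (rule sum.cong[OF refl])
    fix G assume "G \<in> Pow E"
    then have "int (lattice_count t G T) = int (card {m \<in> QQ T. supp m \<subseteq> G})" using lattice_eq by simp
    also have "\<dots> = (\<Sum>m\<in>QQ T. if supp m \<subseteq> G then 1 else 0)"
      using sum.inter_filter[OF finQ[of T], where g="\<lambda>_. (1::int)" and P="\<lambda>m. supp m \<subseteq> G"] by simp
    finally show "coeff E A G * int (lattice_count t G T) = coeff E A G * (\<Sum>m\<in>QQ T. if supp m \<subseteq> G then 1 else 0)"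
      by simp
  qed
  also have "\<dots> = (\<Sum>G\<in>Pow E. \<Sum>m\<in>QQ T. if supp m \<subseteq> G then coeff E A G else 0)"
    unfolding sum_distrib_left by (rule sum.cong[OF refl], rule sum.cong[OF refl]) simp
  also have "\<dots> = (\<Sum>m\<in>QQ T. \<Sum>G\<in>Pow E. if supp m \<subseteq> G then coeff E A G else 0)"
    by (rule sum.swap)
  also have "\<dots> = (\<Sum>m\<in>QQ T. wt (supp m))"
  proof (rule sum.cong[OF refl])
    fix m
    have "(\<Sum>G\<in>Pow E. if supp m \<subseteq> G then coeff E A G else 0) = (\<Sum>G\<in>{G\<in>Pow E. supp m \<subseteq> G}. coeff E A G)"
      by (rule sum.inter_filter[OF finP, symmetric])
    also have "\<dots> = wt (supp m)" by (rule key) (auto simp: supp_def)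
    finally show "(\<Sum>G\<in>Pow E. if supp m \<subseteq> G then coeff E A G else 0) = wt (supp m)" .
  qed
  finally show ?thesis using NN_eq by simp
qed

end

theorem theorem1:
  fixes V :: "'v set" and E :: "'v set set" and t :: "'v set \<Rightarrow> real"
    and A :: 'v and T :: real
  assumes "is_tree V E"
    and "\<forall>e\<in>E. t e > 0"
    and "lin_indep_Q E t"
    and "A \<in> V"
    and "T \<ge> 0"
  shows "NN E t A A T = (\<Sum>G\<in>Pow E. coeff E A G * int (lattice_count t G T))"
proof -
  interpret dyn V E A t using assms by unfold_locales auto
  show ?thesis by (rule main)
qed

end
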